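(* Let $\iota(x_0):\mathbb C^{\mathcal L(\Omega)}\to\mathbb C^{\mathcal L(\Omega/x_0)}\otimes\mathbb C^{\mathcal L(x_0)}$ be the linear map $x\mapsto ((x+x_0)/x_0)\otimes(x\cap x_0)$. Equip $\mathbb C^{\mathcal L(\Omega)}$ with the $\mathfrak{W}_q$-module structure $\mathbb C^{\mathcal L(\Omega)}(x_0)$ described in the context, and $\mathbb C^{\mathcal L(\Omega/x_0)}\otimes\mathbb C^{\mathcal L(x_0)}$ with the $U_q(\mathfrak{sl}_2)\otimes U_q(\mathfrak{sl}_2)$-module structure $\mathbb C^{\mathcal L(\Omega/x_0)}(1)\otimes\mathbb C^{\mathcal L(x_0)}(q^{\dim x_0})$. Then for every $X\in\mathfrak{W}_q$, $\iota(x_0)\circ X=\flat(X)\circ\iota(x_0)$.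
   Context: $\Omega$ is a $D$-dimensional vector space over a finite field $\mathbb F$, $q=\sqrt{|\mathbb F|}$; $[x,y]=xy-yx$, $[x,y]_q=qxy-q^{-1}yx$. $U_q(\mathfrak{sl}_2)$ is generated by $E,F,K^{\pm1}$ with $KK^{-1}=K^{-1}K=1$, $[E,K]_q=[K,F]_q=0$, $[E,F]=\frac{K-K^{-1}}{q-q^{-1}}$. For a finite-dimensional $\mathbb F$-vector space $V$ of dimension $N$ and $\lambda\in\mathbb C\setminus\{0\}$, $\mathbb C^{\mathcal L(V)}(\lambda)$ is the $U_q(\mathfrak{sl}_2)$-module on the space with basis the set $\mathcal L(V)$ of subspaces of $V$ given by $Ex=\lambda q^{-N}\sum_{x'\subset\mathrel{\cdot} x}x'$, $Fx=\lambda^{-1}q\sum_{x\subset\mathrel{\cdot} x'}x'$, $K^{\pm1}x=q^{\pm(N-2\dim x)}x$, where $x'\subset\mathrel{\cdot}x$ means $x'\subseteq x$, $\dim x'=\dim x-1$. $\mathfrak{W}_q$ is generated by $E_1,E_2,F_1,F_2,K_1^{\pm1},K_2^{\pm1},I^{\pm1}$ subject to: $I$ central; $II^{-1}=I^{-1}I=1$, $K_1K_1^{-1}=K_1^{-1}K_1=1$, $K_2K_2^{-1}=K_2^{-1}K_2=1$; $[K_1,E_2]=[K_1,F_2]=[K_1,K_2]=[K_2,E_1]=[K_2,F_1]=0$; $[E_1,K_1]_q=[K_1,F_1]_q=[E_2,K_2]_q=[K_2,F_2]_q=0$; $[E_1,E_2]=[E_1,F_2]=[F_1,E_2]=[F_1,F_2]=0$;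 $[E_1,F_1]=\frac{K_1-IK_1^{-1}}{q-q^{-1}}$; $[E_2,F_2]=\frac{IK_2-K_2^{-1}}{q-q^{-1}}$. $\flat:\mathfrak{W}_q\to U_q(\mathfrak{sl}_2)\otimes U_q(\mathfrak{sl}_2)$ is the algebra homomorphism $E_1\mapsto E\otimes1$, $E_2\mapsto1\otimes E$, $F_1\mapsto F\otimes1$, $F_2\mapsto1\otimes F$, $K_1^{\pm1}\mapsto K^{\pm1}\otimes1$, $K_2^{\pm1}\mapsto1\otimes K^{\pm1}$, $I^{\pm1}\mapsto1\otimes1$. Fix $x_0,x_1\in\mathcal L(\Omega)$ with $\Omega=x_0\oplus x_1$; write $u=u_0+u_1$; $\tau(x):(x+x_0)/x_0\to x_0/(x\cap x_0)$, $u+x_0\mapsto u_0+(x\cap x_0)$ ($u\in x$); $|y|$ is the cardinality of $y$. The $\mathfrak{W}_q$-module $\mathbb C^{\mathcal L(\Omega)}(x_0)$ is given by $E_1=q^{\dim x_0-D}L_1$, $E_2=q^{\dim x_0-D}D_1L_2$, $F_1=q^{1-\dim x_0}R_1D_2^{-1}$, $F_2=q^{1-\dim x_0}R_2$, $K_1^{\pm1}=D_1^{\pm1}$, $K_2^{\pm1}=D_2^{\pm1}$, $I^{\pm1}=q^{\mp D}D_1^{\pm1}D_2^{\mp1}((q^2-1)D_3+D_4)^{\pm1}$, where: $L_1x=\sum_{x'\subset\mathrel{\cdot}x,\ x'\cap x_0=x\cap x_0}x'$; $L_2x=\sum_{x'\subset\mathrel{\cdot}x,\ x'+x_0=x+x_0}x'$;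 $R_1x=\sum_{x\subset\mathrel{\cdot}x',\ x'\cap x_0=x\cap x_0}x'$; $R_2x=\sum_{x\subset\mathrel{\cdot}x',\ x'+x_0=x+x_0}x'$; $D_1x=q^{\dim(\Omega/x_0)-2\dim((x+x_0)/x_0)}x$; $D_2x=q^{\dim x_0-2\dim(x\cap x_0)}x$; $D_3x=\sum x'$ over $x'$ with $x'+x_0=x+x_0$, $x'\cap x_0=x\cap x_0$, $\operatorname{rank}(\tau(x')-\tau(x))=1$; $D_4x=(\frac{|x|+|x_0|}{|x\cap x_0|}-1)x$. *)

theory Defs
  imports "HOL-Analysis.Analysis"
begin

(* Omega = 'f^'n, a D-dimensional vector space (D = CARD('n)) over the finite field 'f.
   Subspaces are subsets of Omega in the sense of vec.subspace; dims via vec.dim. *)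

definition Lsub :: "('f::field^'n) set set" where
  "Lsub = {x. vec.subspace x}"

definition ssum :: "('f::field^'n) set \<Rightarrow> ('f^'n) set \<Rightarrow> ('f^'n) set" where
  "ssum A B = {a + b | a b. a \<in> A \<and> b \<in> B}"

definition cov :: "('f::field^'n) set \<Rightarrow> ('f^'n) set \<Rightarrow> bool" where
  "cov x' x \<longleftrightarrow> x' \<subseteq> x \<and> vec.dim x' + 1 = vec.dim x"

(* linear operator on C^S given by its coefficient matrix: basis x \<mapsto> \<Sum>_y M x y \<cdot> y *)
definition mop :: "('a::finite \<Rightarrow> 'a \<Rightarrow> complex) \<Rightarrow> ('a \<Rightarrow> complex) \<Rightarrow> ('a \<Rightarrow> complex)" where
  "mop M v = (\<lambda>y. \<Sum>x\<in>UNIV. v x * M x y)"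

definition scop :: "complex \<Rightarrow> (('a \<Rightarrow> complex) \<Rightarrow> ('a \<Rightarrow> complex)) \<Rightarrow> ('a \<Rightarrow> complex) \<Rightarrow> ('a \<Rightarrow> complex)" where
  "scop c A = (\<lambda>v y. c * A v y)"

definition Vspace :: "(('f::field^'n) set \<Rightarrow> complex) set" where
  "Vspace = {v. \<forall>x. x \<notin> Lsub \<longrightarrow> v x = 0}"

datatype 'g fterm = Gen 'g | Scal complex | Plus "'g fterm" "'g fterm" | Times "'g fterm" "'g fterm"

primrec act :: "('g \<Rightarrow> ('v \<Rightarrow> complex) \<Rightarrow> ('v \<Rightarrow> complex)) \<Rightarrow> 'g fterm \<Rightarrow> ('v \<Rightarrow> complex) \<Rightarrow> ('v \<Rightarrow> complex)" where
  "act \<rho> (Gen g) = \<rho> g"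
| "act \<rho> (Scal c) = (\<lambda>v y. c * v y)"
| "act \<rho> (Plus a b) = (\<lambda>v y. act \<rho> a v y + act \<rho> b v y)"
| "act \<rho> (Times a b) = act \<rho> a \<circ> act \<rho> b"

primrec fsubst :: "('g \<Rightarrow> 'h fterm) \<Rightarrow> 'g fterm \<Rightarrow> 'h fterm" where
  "fsubst f (Gen g) = f g"
| "fsubst f (Scal c) = Scal c"
| "fsubst f (Plus a b) = Plus (fsubst f a) (fsubst f b)"
| "fsubst f (Times a b) = Times (fsubst f a) (fsubst f b)"

datatype ugen = UE | UF | UK | UKi

(* generators of U_q(sl2) \<otimes> U_q(sl2): a\<otimes>1 and 1\<otimes>a *)
datatype tgen = TL ugen | TR ugen

datatype wgen = WE1 | WE2 | WF1 | WF2 | WK1 | WK1i | WK2 | WK2i | WI | WIi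

fun flat_gen :: "wgen \<Rightarrow> tgen fterm" where
  "flat_gen WE1 = Gen (TL UE)"
| "flat_gen WE2 = Gen (TR UE)"
| "flat_gen WF1 = Gen (TL UF)"
| "flat_gen WF2 = Gen (TR UF)"
| "flat_gen WK1 = Gen (TL UK)"
| "flat_gen WK1i = Gen (TL UKi)"
| "flat_gen WK2 = Gen (TR UK)"
| "flat_gen WK2i = Gen (TR UKi)"
| "flat_gen WI = Scal 1"
| "flat_gen WIi = Scal 1"

definition flat :: "wgen fterm \<Rightarrow> tgen fterm" where
  "flat = fsubst flat_gen"

(* ---------- the U_q(sl2)-module C^{L(V)}(lam) ----------
   V is represented by the interval of subspaces between lo and hi (lo \<subseteq> hi),
   i.e. L(hi/lo) \<cong> {x subspace. lo \<subseteq> x \<subseteq> hi} via x \<mapsto> x/lo, dim(x/lo) = dim x - dim lo. *)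

definition Lint :: "('f::field^'n) set \<Rightarrow> ('f^'n) set \<Rightarrow> ('f^'n) set set" where
  "Lint lo hi = {x. vec.subspace x \<and> lo \<subseteq> x \<and> x \<subseteq> hi}"

definition rdim :: "('f::field^'n) set \<Rightarrow> ('f^'n) set \<Rightarrow> int" where
  "rdim lo x = int (vec.dim x) - int (vec.dim lo)"

fun Umat :: "complex \<Rightarrow> complex \<Rightarrow> ('f::field^'n) set \<Rightarrow> ('f^'n) set \<Rightarrow> ugen
             \<Rightarrow> ('f^'n) set \<Rightarrow> ('f^'n) set \<Rightarrow> complex" where
  "Umat q lam lo hi UE = (\<lambda>x x'. if x \<in> Lint lo hi \<and> x' \<in> Lint lo hi \<and> cov x' x
        then lam * q powi (- rdim lo hi) else 0)"
| "Umat q lam lo hi UF = (\<lambda>x x'. if x \<in> Lint lo hi \<and> x' \<in> Lint lo hi \<and> cov x x'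
        then q / lam else 0)"
| "Umat q lam lo hi UK = (\<lambda>x x'. if x \<in> Lint lo hi \<and> x' = x
        then q powi (rdim lo hi - 2 * rdim lo x) else 0)"
| "Umat q lam lo hi UKi = (\<lambda>x x'. if x \<in> Lint lo hi \<and> x' = x
        then q powi (- (rdim lo hi - 2 * rdim lo x)) else 0)"

fun tens_act :: "(ugen \<Rightarrow> 'a::finite \<Rightarrow> 'a \<Rightarrow> complex) \<Rightarrow> (ugen \<Rightarrow> 'b::finite \<Rightarrow> 'b \<Rightarrow> complex)
                 \<Rightarrow> tgen \<Rightarrow> ('a \<times> 'b \<Rightarrow> complex) \<Rightarrow> ('a \<times> 'b \<Rightarrow> complex)" where
  "tens_act M1 M2 (TL u) = (\<lambda>w (y, z). \<Sum>y'\<in>UNIV. w (y', z) * M1 u y' y)"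
| "tens_act M1 M2 (TR u) = (\<lambda>w (y, z). \<Sum>z'\<in>UNIV. w (y, z') * M2 u z' z)"

definition proj0 :: "('f::field^'n) set \<Rightarrow> ('f^'n) set \<Rightarrow> 'f^'n \<Rightarrow> 'f^'n" where
  "proj0 x0 x1 u = (THE a. a \<in> x0 \<and> u - a \<in> x1)"

(* tau(x): (x+x0)/x0 \<rightarrow> x0/(x\<inter>x0), u + x0 \<mapsto> u0 + (x\<inter>x0) for u \<in> x;
   given on representatives w \<in> x + x0, value a representative in x0 *)
definition tau :: "('f::field^'n) set \<Rightarrow> ('f^'n) set \<Rightarrow> ('f^'n) set \<Rightarrow> 'f^'n \<Rightarrow> 'f^'n" where
  "tau x0 x1 x w = proj0 x0 x1 (SOME u. u \<in> x \<and> u - w \<in> x0)"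

(* rank of tau(x') - tau(x): dimension of its image, a subspace of x0/(x\<inter>x0),
   computed as dim(preimage in x0) - dim(x\<inter>x0) *)
definition rank_tau_diff :: "('f::field^'n) set \<Rightarrow> ('f^'n) set \<Rightarrow> ('f^'n) set \<Rightarrow> ('f^'n) set \<Rightarrow> nat" where
  "rank_tau_diff x0 x1 x x' =
     vec.dim (ssum ((\<lambda>w. tau x0 x1 x' w - tau x0 x1 x w) ` ssum x x0) (x \<inter> x0)) - vec.dim (x \<inter> x0)"

definition L1 where
  "L1 x0 = (\<lambda>x x'. if x \<in> Lsub \<and> x' \<in> Lsub \<and> cov x' x \<and> x' \<inter> x0 = x \<inter> x0 then (1::complex) else 0)"
definition L2 where
  "L2 x0 = (\<lambda>x x'. if x \<in> Lsub \<and> x' \<in> Lsub \<and> cov x' x \<and> ssum x' x0 = ssum x x0 then (1::complex) else 0)"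
definition R1 where
  "R1 x0 = (\<lambda>x x'. if x \<in> Lsub \<and> x' \<in> Lsub \<and> cov x x' \<and> x' \<inter> x0 = x \<inter> x0 then (1::complex) else 0)"
definition R2 where
  "R2 x0 = (\<lambda>x x'. if x \<in> Lsub \<and> x' \<in> Lsub \<and> cov x x' \<and> ssum x' x0 = ssum x x0 then (1::complex) else 0)"

definition diagm :: "(('f::field^'n) set \<Rightarrow> complex) \<Rightarrow> ('f^'n) set \<Rightarrow> ('f^'n) set \<Rightarrow> complex" where
  "diagm d = (\<lambda>x x'. if x \<in> Lsub \<and> x' = x then d x else 0)"

definition e1 :: "('f::field^'n) set \<Rightarrow> ('f^'n) set \<Rightarrow> int" where
  "e1 x0 x = (int (vec.dim (UNIV :: ('f^'n) set)) - int (vec.dim x0))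
             - 2 * (int (vec.dim (ssum x x0)) - int (vec.dim x0))"

definition e2 :: "('f::field^'n) set \<Rightarrow> ('f^'n) set \<Rightarrow> int" where
  "e2 x0 x = int (vec.dim x0) - 2 * int (vec.dim (x \<inter> x0))"

definition D1 where "D1 q x0 = diagm (\<lambda>x. q powi e1 x0 x)"
definition D1i where "D1i q x0 = diagm (\<lambda>x. q powi (- e1 x0 x))"
definition D2 where "D2 q x0 = diagm (\<lambda>x. q powi e2 x0 x)"
definition D2i where "D2i q x0 = diagm (\<lambda>x. q powi (- e2 x0 x))"

definition D3 where
  "D3 x0 x1 = (\<lambda>x x'. if x \<in> Lsub \<and> x' \<in> Lsub \<and> ssum x' x0 = ssum x x0 \<and> x' \<inter> x0 = x \<inter> x0
        \<and> rank_tau_diff x0 x1 x x' = 1 then (1::complex) else 0)"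

definition D4 where
  "D4 x0 = diagm (\<lambda>x. of_real ((real (card x) + real (card x0)) / real (card (x \<inter> x0)) - 1))"

definition Top where
  "Top q x0 x1 = (\<lambda>v y. (q\<^sup>2 - 1) * mop (D3 x0 x1) v y + mop (D4 x0) v y)"

definition Dim :: "'f::field itself \<Rightarrow> 'n::finite itself \<Rightarrow> int" where
  "Dim _ _ = int (vec.dim (UNIV :: ('f^'n) set))"

fun Wop :: "complex \<Rightarrow> ('f::{field,finite}^'n) set \<Rightarrow> ('f^'n) set \<Rightarrow> wgen
            \<Rightarrow> (('f^'n) set \<Rightarrow> complex) \<Rightarrow> (('f^'n) set \<Rightarrow> complex)" where
  "Wop q x0 x1 WE1 = scop (q powi (int (vec.dim x0) - Dim TYPE('f) TYPE('n))) (mop (L1 x0))"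
| "Wop q x0 x1 WE2 = scop (q powi (int (vec.dim x0) - Dim TYPE('f) TYPE('n))) (mop (D1 q x0) \<circ> mop (L2 x0))"
| "Wop q x0 x1 WF1 = scop (q powi (1 - int (vec.dim x0))) (mop (R1 x0) \<circ> mop (D2i q x0))"
| "Wop q x0 x1 WF2 = scop (q powi (1 - int (vec.dim x0))) (mop (R2 x0))"
| "Wop q x0 x1 WK1 = mop (D1 q x0)"
| "Wop q x0 x1 WK1i = mop (D1i q x0)"
| "Wop q x0 x1 WK2 = mop (D2 q x0)"
| "Wop q x0 x1 WK2i = mop (D2i q x0)"
| "Wop q x0 x1 WI = scop (q powi (- Dim TYPE('f) TYPE('n)))
      (mop (D1 q x0) \<circ> mop (D2i q x0) \<circ> Top q x0 x1)"
| "Wop q x0 x1 WIi = scop (q powi (Dim TYPE('f) TYPE('n)))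
      (mop (D1i q x0) \<circ> mop (D2 q x0) \<circ> inv_into Vspace (Top q x0 x1))"

definition iota :: "('f::{field,finite}^'n) set \<Rightarrow> (('f^'n) set \<Rightarrow> complex) \<Rightarrow> (('f^'n) set \<times> ('f^'n) set \<Rightarrow> complex)" where
  "iota x0 v = (\<lambda>(y, z). \<Sum>x\<in>Lsub. v x * (if y = ssum x x0 \<and> z = x \<inter> x0 then 1 else 0))"

end

theory Submission
  imports Defs
begin

lemma card_subspace:
  fixes S :: "('f::{field,finite}^'n) set"
  assumes "vec.subspace S"
  shows "card S = CARD('f) ^ vec.dim S"
proof -
  obtain B where B: "finite B" "B \<subseteq> S" "vec.independent B" "vec.span B = S" "card B = vec.dim S"
    using vec.basis_subspace_exists[OF assms] by metis
  let ?f = "\<lambda>u. \<Sum>v\<in>B. u v *s v" and ?P = "PiE B (\<lambda>_. UNIV::'f set)"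
  have "bij_betw ?f (?P) S"
  proof (rule bij_betwI')
    fix c d assume c: "c \<in> ?P" and d: "d \<in> ?P"
    show "(?f c = ?f d) = (c = d)"
    proof
      assume eq: "?f c = ?f d"
      have "(\<Sum>v\<in>B. (c v - d v) *s v) = 0"
        using eq by (simp add: scaleR_diff_left sum_subtractf vector_sub_rdistrib)
      then have "\<forall>v\<in>B. c v - d v = 0"
        using B(3) unfolding vec.independent_explicit
        apply (elim conjE) apply (drule spec[of _ "\<lambda>v. c v - d v"]) by simp
      then show "c = d" using c d by (intro PiE_ext[of c B "\<lambda>_. UNIV" d]) simp_all
    qed simp
  next
    fix c assume "c \<in> ?P"
    have "?f c \<in> vec.span B" by (intro vec.span_sum vec.span_scale vec.span_base)
    then show "?f c \<in> S" using B(4) by simp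
  next
    fix s assume "s \<in> S"
    then have "s \<in> range ?f" using B(1,4) vec.span_finite[of B] by simp
    then obtain u where u: "s = ?f u" by blast
    show "\<exists>c\<in>?P. s = ?f c"
    proof (rule bexI[of _ "restrict u B"])
      show "s = ?f (restrict u B)" unfolding u by (rule sum.cong) auto
    qed simp
  qed
  then have "card ?P = card S" by (rule bij_betw_same_card)
  then have "card S = card (PiE B (\<lambda>_. (UNIV::'f set)))" by simp
  also have "\<dots> = CARD('f) ^ card B" using B(1) by (simp add: card_PiE)
  finally show ?thesis using B by simp
qed


abbreviation "sub \<equiv> vec.subspace"
abbreviation "dd \<equiv> vec.dim"

lemma sub_ssum: "sub A \<Longrightarrow> sub B \<Longrightarrow> sub (ssum A B)"
  unfolding ssum_def by (rule vec.subspace_sums)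

lemma dim_ssum: "sub A \<Longrightarrow> sub B \<Longrightarrow> dd (ssum A B) + dd (A \<inter> B) = dd A + dd B"
  unfolding ssum_def by (rule vec.dim_sums_Int)

lemma ssum_ge1: "sub B \<Longrightarrow> A \<subseteq> ssum A B"
  unfolding ssum_def using vec.subspace_0 by force

lemma ssum_ge2: "sub A \<Longrightarrow> B \<subseteq> ssum A B"
  unfolding ssum_def using vec.subspace_0 by force

lemma ssum_least: "sub C \<Longrightarrow> A \<subseteq> C \<Longrightarrow> B \<subseteq> C \<Longrightarrow> ssum A B \<subseteq> C"
  unfolding ssum_def using vec.subspace_add by blast

lemma ssum_mem: "a \<in> A \<Longrightarrow> b \<in> B \<Longrightarrow> a + b \<in> ssum A B"
  unfolding ssum_def by blast

lemma ssum_memE: "x \<in> ssum A B \<Longrightarrow> (\<And>a b. a \<in> A \<Longrightarrow> b \<in> B \<Longrightarrow> x = a + b \<Longrightarrow> P) \<Longrightarrow> P"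
  unfolding ssum_def by blast

lemma ssum_comm: "ssum A B = ssum B A"
  unfolding ssum_def by (metis (no_types, lifting) add.commute)

lemma ssum_mono: "A \<subseteq> A' \<Longrightarrow> B \<subseteq> B' \<Longrightarrow> ssum A B \<subseteq> ssum A' B'"
  unfolding ssum_def by blast

lemma ssum_absorb: "sub A \<Longrightarrow> sub B \<Longrightarrow> A \<subseteq> B \<Longrightarrow> ssum A B = B"
  by (rule subset_antisym[OF ssum_least[OF _ _ order.refl] ssum_ge2])

lemma sub_eq_dim: "sub A \<Longrightarrow> sub B \<Longrightarrow> A \<subseteq> B \<Longrightarrow> dd B \<le> dd A \<Longrightarrow> A = B"
  by (rule vec.subspace_dim_equal)

lemma dim_mono: "A \<subseteq> B \<Longrightarrow> dd A \<le> dd B"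
  by (rule vec.dim_subset)

lemma sub_inter: "sub A \<Longrightarrow> sub B \<Longrightarrow> sub (A \<inter> B)"
  by (rule vec.subspace_inter)

lemma dim_psub: "sub A \<Longrightarrow> sub B \<Longrightarrow> A \<subseteq> B \<Longrightarrow> A \<noteq> B \<Longrightarrow> dd A < dd B"
  using sub_eq_dim dim_mono by (metis le_neq_implies_less not_le)


lemma Q_ge2: "2 \<le> CARD('f::{field,finite})"
proof -
  have "card {0::'f, 1} = 2" by simp
  moreover have "card {0::'f, 1} \<le> CARD('f)" by (rule card_mono) simp_all
  ultimately show ?thesis by simp
qed

definition sp1 :: "('f::field^'n) \<Rightarrow> ('f^'n) set \<Rightarrow> ('f^'n) set" where
  "sp1 v s = vec.span (insert v s)"

lemma sp1_props:
  assumes "sub s" "v \<notin> s"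
  shows "sub (sp1 v s)" "s \<subseteq> sp1 v s" "v \<in> sp1 v s" "dd (sp1 v s) = dd s + 1"
proof -
  show "sub (sp1 v s)" unfolding sp1_def by simp
  show "s \<subseteq> sp1 v s" unfolding sp1_def by (meson subset_insertI vec.span_superset order_trans)
  show "v \<in> sp1 v s" unfolding sp1_def by (simp add: vec.span_base)
  have h: "v \<notin> vec.span s" using assms vec.span_eq_iff by blast
  show "dd (sp1 v s) = dd s + 1" unfolding sp1_def vec.dim_span vec.dim_insert using h by simp
qed

lemma sp1_least: "sub w \<Longrightarrow> s \<subseteq> w \<Longrightarrow> v \<in> w \<Longrightarrow> sp1 v s \<subseteq> w"
  unfolding sp1_def by (simp add: vec.span_minimal)

lemma sp1_eq:
  assumes "sub s" "sub w" "s \<subseteq> w" "v \<in> w" "v \<notin> s" "dd w = dd s + 1"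
  shows "sp1 v s = w"
  by (rule sub_eq_dim) (use sp1_props[OF assms(1,5)] sp1_least[OF assms(2,3,4)] assms(2,6) in auto)

definition up1 :: "('f::field^'n) set \<Rightarrow> ('f^'n) set \<Rightarrow> ('f^'n) set set" where
  "up1 x y = {w. sub w \<and> x \<subseteq> w \<and> w \<subseteq> y \<and> dd w = dd x + 1}"

lemma card_diff_sub:
  fixes x y :: "('f::{field,finite}^'n) set"
  assumes "sub x" "sub y" "x \<subseteq> y"
  shows "card (y - x) = CARD('f) ^ dd y - CARD('f) ^ dd x"
  using card_Diff_subset[OF _ assms(3)] card_subspace[OF assms(1)] card_subspace[OF assms(2)]
  by (simp add: finite_subset)

lemma up1_count:
  fixes x y :: "('f::{field,finite}^'n) set"
  assumes "sub x" "sub y" "x \<subseteq> y"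
  shows "card (up1 x y) * (CARD('f) ^ (dd x + 1) - CARD('f) ^ dd x) = CARD('f) ^ dd y - CARD('f) ^ dd x"
proof -
  let ?W = "up1 x y"
  have eqU: "y - x = (\<Union>w\<in>?W. w - x)"
  proof
    show "y - x \<subseteq> (\<Union>w\<in>?W. w - x)"
    proof
      fix v assume v: "v \<in> y - x"
      then have "sp1 v x \<in> ?W" unfolding up1_def
        using sp1_props[OF assms(1), of v] sp1_least[OF assms(2,3), of v] by auto
      moreover have "v \<in> sp1 v x - x" using sp1_props[OF assms(1), of v] v by auto
      ultimately show "v \<in> (\<Union>w\<in>?W. w - x)" by blast
    qed
  next
    show "(\<Union>w\<in>?W. w - x) \<subseteq> y - x" unfolding up1_def by blast
  qed
  have disj: "\<forall>w1\<in>?W. \<forall>w2\<in>?W. w1 \<noteq> w2 \<longrightarrow> (w1 - x) \<inter> (w2 - x) = {}"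
  proof (intro ballI impI)
    fix w1 w2 assume w1: "w1 \<in> ?W" and w2: "w2 \<in> ?W" and ne: "w1 \<noteq> w2"
    show "(w1 - x) \<inter> (w2 - x) = {}"
    proof (rule ccontr)
      assume "(w1 - x) \<inter> (w2 - x) \<noteq> {}"
      then obtain v where v: "v \<in> w1" "v \<in> w2" "v \<notin> x" by blast
      have "sp1 v x = w1" using w1 v assms(1) unfolding up1_def by (intro sp1_eq) auto
      moreover have "sp1 v x = w2" using w2 v assms(1) unfolding up1_def by (intro sp1_eq) auto
      ultimately show False using ne by simp
    qed
  qed
  have "card (y - x) = (\<Sum>w\<in>?W. card (w - x))"
    unfolding eqU by (rule card_UN_disjoint) (use disj in auto)
  also have "\<dots> = (\<Sum>w\<in>?W. CARD('f) ^ (dd x + 1) - CARD('f) ^ dd x)"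
  proof (rule sum.cong[OF refl])
    fix w assume "w \<in> ?W"
    then show "card (w - x) = CARD('f) ^ (dd x + 1) - CARD('f) ^ dd x"
      unfolding up1_def using card_diff_sub[OF assms(1), of w] by auto
  qed
  also have "\<dots> = card ?W * (CARD('f) ^ (dd x + 1) - CARD('f) ^ dd x)" by simp
  finally show ?thesis using card_diff_sub[OF assms] by simp
qed


lemma dcount:
  assumes "finite A" "finite B"
  shows "(\<Sum>a\<in>A. card {b\<in>B. R a b}) = (\<Sum>b\<in>B. card {a\<in>A. R a b})"
proof -
  have c: "\<And>C P. finite C \<Longrightarrow> card {c\<in>C. P c} = (\<Sum>c\<in>C. if P c then 1 else 0::nat)"
    by (simp add: sum.inter_filter[symmetric])
  show ?thesis
    using assms by (simp add: c sum.swap[of _ A B])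
qed

lemma ring_aux1:
  fixes c P A Q :: int
  shows "c * (P * A - P) * (Q - 1) = (P * (Q * A) - P) * (A - 1) \<Longrightarrow> c * (Q - 1) * (P * (A - 1)) = (Q * A - 1) * (P * (A - 1))"
  by (simp add: algebra_simps)

definition hyp :: "('f::field^'n) set \<Rightarrow> ('f^'n) set \<Rightarrow> ('f^'n) set set" where
  "hyp s V = {g. sub g \<and> s \<subseteq> g \<and> g \<subseteq> V \<and> dd g + 1 = dd V}"

lemma hyp_ins:
  assumes "sub s" "v \<notin> s"
  shows "{g\<in>hyp s V. v \<in> g} = hyp (sp1 v s) V"
proof
  show "{g\<in>hyp s V. v \<in> g} \<subseteq> hyp (sp1 v s) V"
  proof
    fix g assume "g \<in> {g\<in>hyp s V. v \<in> g}"
    then have g: "sub g" "s \<subseteq> g" "g \<subseteq> V" "dd g + 1 = dd V" "v \<in> g" unfolding hyp_def by auto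
    show "g \<in> hyp (sp1 v s) V" unfolding hyp_def using g sp1_least[OF g(1,2,5)] by auto
  qed
  show "hyp (sp1 v s) V \<subseteq> {g\<in>hyp s V. v \<in> g}"
    using sp1_props[OF assms] unfolding hyp_def by auto
qed

lemma finite_sets: "finite (A :: ('f::{field,finite}^'n) set set)"
  by simp

lemma hyp_count_aux:
  fixes s V :: "('f::{field,finite}^'n) set"
  shows "sub s \<Longrightarrow> sub V \<Longrightarrow> s \<subseteq> V \<Longrightarrow> dd V = dd s + k \<Longrightarrow>
    int (card (hyp s V)) * (int CARD('f) - 1) = int CARD('f) ^ k - 1"
proof (induction k arbitrary: s)
  case 0
  then have "s = V" by (intro sub_eq_dim) auto
  then have "hyp s V = {}" unfolding hyp_def using dim_mono by fastforce
  then show ?case by simp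
next
  case (Suc k)
  note sV = Suc.prems(1,2,3)
  show ?case
  proof (cases k)
    case 0
    have "hyp s V = {s}"
    proof
      show "hyp s V \<subseteq> {s}" unfolding hyp_def using Suc.prems 0
        by (auto dest: sub_eq_dim)
      show "{s} \<subseteq> hyp s V" unfolding hyp_def using Suc.prems 0 by auto
    qed
    then show ?thesis using 0 by simp
  next
    case (Suc k')
    let ?Q = "CARD('f)"
    let ?H = "hyp s V"
    have fA: "(\<Sum>g\<in>?H. card {v\<in>V - s. v \<in> g}) = (\<Sum>v\<in>V - s. card {g\<in>?H. v \<in> g})"
      by (rule dcount) simp_all
    have fB: "(\<Sum>g\<in>?H. card {v\<in>V - s. v \<in> g}) = card ?H * (?Q ^ (dd V - 1) - ?Q ^ dd s)"
    proof -
      have "\<And>g. g \<in> ?H \<Longrightarrow> card {v\<in>V - s. v \<in> g} = ?Q ^ (dd V - 1) - ?Q ^ dd s"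
      proof -
        fix g assume g: "g \<in> ?H"
        then have "{v\<in>V - s. v \<in> g} = g - s" unfolding hyp_def by auto
        moreover have "dd g = dd V - 1" using g unfolding hyp_def by auto
        ultimately show "card {v\<in>V - s. v \<in> g} = ?Q ^ (dd V - 1) - ?Q ^ dd s"
          using card_diff_sub[OF sV(1), of g] g unfolding hyp_def by auto
      qed
      then show ?thesis by simp
    qed
    have fC: "int (\<Sum>v\<in>V - s. card {g\<in>?H. v \<in> g}) * (int ?Q - 1) = int (card (V - s)) * (int ?Q ^ k - 1)"
    proof -
      have "\<And>v. v \<in> V - s \<Longrightarrow> int (card {g\<in>?H. v \<in> g}) * (int ?Q - 1) = int ?Q ^ k - 1"
      proof -
        fix v assume v: "v \<in> V - s"
        have "int (card (hyp (sp1 v s) V)) * (int ?Q - 1) = int ?Q ^ k - 1"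
          apply (rule Suc.IH)
          using sp1_props[OF sV(1), of v] sp1_least[OF sV(2,3), of v] v Suc.prems(4) sV by auto
        then show "int (card {g\<in>?H. v \<in> g}) * (int ?Q - 1) = int ?Q ^ k - 1"
          using hyp_ins[OF sV(1), of v V] v by simp
      qed
      then have "(\<Sum>v\<in>V - s. int (card {g\<in>?H. v \<in> g}) * (int ?Q - 1)) = (\<Sum>v\<in>V - s. int ?Q ^ k - 1)"
        by (rule sum.cong[OF refl])
      then show ?thesis by (simp add: sum_distrib_right)
    qed
    have "int (card ?H * (?Q ^ (dd V - 1) - ?Q ^ dd s)) * (int ?Q - 1)
        = int (card (V - s)) * (int ?Q ^ k - 1)"
      using fA fB fC by simp
    then have eq: "int (card ?H) * (int (?Q ^ (dd V - 1) - ?Q ^ dd s)) * (int ?Q - 1)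
        = int (card (V - s)) * (int ?Q ^ k - 1)"
      by (simp only: of_nat_mult)
    have cVs: "int (card (V - s)) = int ?Q ^ dd V - int ?Q ^ dd s"
      using card_diff_sub[OF sV] sV power_increasing[of "dd s" "dd V" ?Q] Q_ge2[where 'f='f]
      by (simp add: of_nat_diff dim_mono)
    have c2: "int (?Q ^ (dd V - 1) - ?Q ^ dd s) = int ?Q ^ (dd V - 1) - int ?Q ^ dd s"
      using power_increasing[of "dd s" "dd V - 1" ?Q] Q_ge2[where 'f='f] Suc.prems(4)
      by (simp add: of_nat_diff)
    define X where "X = int (card ?H) * (int ?Q - 1)"
    define P where "P = int ?Q ^ dd s"
    define M where "M = P * (int ?Q ^ k - 1)"
    have dV: "dd V = dd s + k + 1" using Suc.prems(4) by simp
    have e1: "int ?Q ^ (dd V - 1) = P * int ?Q ^ k" by (simp add: dV P_def power_add)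
    have e2: "int ?Q ^ dd V = P * int ?Q ^ (k+1)" by (simp add: dV P_def power_add)
    have eq': "int (card ?H) * (P * int ?Q ^ k - P) * (int ?Q - 1) = (P * int ?Q ^ (k+1) - P) * (int ?Q ^ k - 1)"
      using eq unfolding cVs c2 e1 e2 P_def by simp
    have "X * M = (int ?Q ^ (k+1) - 1) * M"
      using ring_aux1[of "int (card ?H)" P "int ?Q ^ k" "int ?Q"] eq' unfolding X_def M_def by simp
    moreover have "M \<noteq> 0"
    proof -
      have "P > 0" unfolding P_def using Q_ge2[where 'f='f] by simp
      moreover have "int ?Q ^ k > 1"
        by (rule one_less_power) (use Q_ge2[where 'f='f] Suc in auto)
      ultimately show ?thesis unfolding M_def by simp
    qed
    ultimately have "X = int ?Q ^ (k+1) - 1" by simp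
    then show ?thesis unfolding X_def by simp
  qed
qed


lemma hyp_count:
  fixes s V :: "('f::{field,finite}^'n) set"
  assumes "sub s" "sub V" "s \<subseteq> V"
  shows "int (card (hyp s V)) * (int CARD('f) - 1) = int CARD('f) ^ (dd V - dd s) - 1"
  using hyp_count_aux[OF assms] dim_mono[OF assms(3)] by simp

lemma hyp_not_count:
  fixes z' z V :: "('f::{field,finite}^'n) set"
  assumes "sub z'" "sub z" "sub V" "z' \<subseteq> z" "z \<subseteq> V" "dd z = dd z' + 1"
  shows "card {g\<in>hyp z' V. \<not> z \<subseteq> g} = CARD('f) ^ (dd V - dd z)"
proof -
  let ?Q = "CARD('f)"
  have s: "{g\<in>hyp z' V. z \<subseteq> g} = hyp z V" using assms unfolding hyp_def by auto
  have "{g\<in>hyp z' V. \<not> z \<subseteq> g} = hyp z' V - hyp z V" using s by blast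
  moreover have "hyp z V \<subseteq> hyp z' V" using s by blast
  ultimately have c: "int (card {g\<in>hyp z' V. \<not> z \<subseteq> g}) = int (card (hyp z' V)) - int (card (hyp z V))"
    by (simp add: card_Diff_subset card_mono of_nat_diff)
  have "dd V - dd z' = dd V - dd z + 1" using assms dim_mono[OF assms(5)] by simp
  then have h1: "int (card (hyp z' V)) * (int ?Q - 1) = int ?Q ^ (dd V - dd z + 1) - 1"
    using hyp_count[of z' V] assms by simp
  have h2: "int (card (hyp z V)) * (int ?Q - 1) = int ?Q ^ (dd V - dd z) - 1"
    using hyp_count[of z V] assms by simp
  have "int (card {g\<in>hyp z' V. \<not> z \<subseteq> g}) * (int ?Q - 1) = int ?Q ^ (dd V - dd z) * (int ?Q - 1)"
    unfolding c using h1 h2 by (simp add: left_diff_distrib algebra_simps)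
  moreover have "int ?Q - 1 \<noteq> 0" using Q_ge2[where 'f='f] by simp
  ultimately have "int (card {g\<in>hyp z' V. \<not> z \<subseteq> g}) = int ?Q ^ (dd V - dd z)" by simp
  then show ?thesis by (simp add: of_nat_eq_iff[symmetric])
qed

lemma up1_count_int:
  fixes x y :: "('f::{field,finite}^'n) set"
  assumes "sub x" "sub y" "x \<subseteq> y"
  shows "int (card (up1 x y)) * (int CARD('f) - 1) * int CARD('f) ^ dd x
       = int CARD('f) ^ dd y - int CARD('f) ^ dd x"
proof -
  let ?Q = "CARD('f)"
  have le1: "?Q ^ dd x \<le> ?Q ^ (dd x + 1)" using Q_ge2[where 'f='f] by (intro power_increasing) auto
  have le2: "?Q ^ dd x \<le> ?Q ^ dd y" using Q_ge2[where 'f='f] dim_mono[OF assms(3)] by (intro power_increasing) auto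
  have "int (card (up1 x y) * (?Q ^ (dd x + 1) - ?Q ^ dd x)) = int (?Q ^ dd y - ?Q ^ dd x)"
    using up1_count[OF assms] by simp
  then show ?thesis using le1 le2 by (simp add: of_nat_diff algebra_simps)
qed

lemma up1_not_count:
  fixes x y y' :: "('f::{field,finite}^'n) set"
  assumes "sub x" "sub y" "sub y'" "x \<subseteq> y" "y \<subseteq> y'" "dd y' = dd y + 1"
  shows "card {w\<in>up1 x y'. \<not> w \<subseteq> y} = CARD('f) ^ (dd y - dd x)"
proof -
  let ?Q = "CARD('f)"
  have s: "{w\<in>up1 x y'. w \<subseteq> y} = up1 x y" using assms unfolding up1_def by auto
  have "{w\<in>up1 x y'. \<not> w \<subseteq> y} = up1 x y' - up1 x y" using s by blast
  moreover have "up1 x y \<subseteq> up1 x y'" using s by blast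
  ultimately have c: "int (card {w\<in>up1 x y'. \<not> w \<subseteq> y}) = int (card (up1 x y')) - int (card (up1 x y))"
    by (simp add: card_Diff_subset card_mono of_nat_diff)
  have h1: "int (card (up1 x y')) * (int ?Q - 1) * int ?Q ^ dd x = int ?Q ^ dd y' - int ?Q ^ dd x"
    using up1_count_int[of x y'] assms by auto
  have h2: "int (card (up1 x y)) * (int ?Q - 1) * int ?Q ^ dd x = int ?Q ^ dd y - int ?Q ^ dd x"
    using up1_count_int[of x y] assms by auto
  have py: "int ?Q ^ dd y = int ?Q ^ dd x * int ?Q ^ (dd y - dd x)"
    using dim_mono[OF assms(4)] by (simp add: power_add[symmetric])
  have py': "int ?Q ^ dd y' = int ?Q * int ?Q ^ dd y" using assms(6) by simp
  have "int (card {w\<in>up1 x y'. \<not> w \<subseteq> y}) * ((int ?Q - 1) * int ?Q ^ dd x)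
      = int ?Q ^ (dd y - dd x) * ((int ?Q - 1) * int ?Q ^ dd x)"
    unfolding c using h1 h2 py py' by (simp add: algebra_simps)
  moreover have "(int ?Q - 1) * int ?Q ^ dd x \<noteq> 0" using Q_ge2[where 'f='f] by simp
  ultimately have "int (card {w\<in>up1 x y'. \<not> w \<subseteq> y}) = int ?Q ^ (dd y - dd x)" by simp
  then show ?thesis by (simp add: of_nat_eq_iff[symmetric])
qed


locale S0 =
  fixes x0 :: "('f::{field,finite}^'n) set"
  assumes s0: "sub x0"
begin

abbreviation Y where "Y x \<equiv> ssum x x0"
abbreviation Z where "Z x \<equiv> x \<inter> x0"

lemma YZ: "sub x \<Longrightarrow> dd (Y x) + dd (Z x) = dd x + dd x0"
  using dim_ssum[OF _ s0] by simp

lemma subY: "sub x \<Longrightarrow> sub (Y x)" using sub_ssum[OF _ s0] .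
lemma subZ: "sub x \<Longrightarrow> sub (Z x)" using sub_inter[OF _ s0] .
lemma x_Y: "x \<subseteq> Y x" using ssum_ge1[OF s0] .
lemma x0_Y: "sub x \<Longrightarrow> x0 \<subseteq> Y x" using ssum_ge2 .
lemma Y_least: "sub C \<Longrightarrow> x \<subseteq> C \<Longrightarrow> x0 \<subseteq> C \<Longrightarrow> Y x \<subseteq> C" using ssum_least .
lemma Y_mono: "x \<subseteq> x' \<Longrightarrow> Y x \<subseteq> Y x'" using ssum_mono by blast

lemma E1_nec:
  assumes a: "sub a" and b: "sub b" and c: "cov b a" and z: "Z b = Z a"
  shows "cov (Y b) (Y a)" "b = a \<inter> Y b"
proof -
  have ba: "b \<subseteq> a" "dd b + 1 = dd a" using c unfolding cov_def by auto
  have "Y b \<subseteq> Y a" using Y_mono[OF ba(1)] .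
  moreover have "dd (Y b) + 1 = dd (Y a)"
    using YZ[OF a] YZ[OF b] arg_cong[OF z, of dd] ba(2) by linarith
  ultimately show "cov (Y b) (Y a)" unfolding cov_def by simp
  have ne: "a \<inter> Y b \<noteq> a"
  proof
    assume "a \<inter> Y b = a"
    then have "Y a \<subseteq> Y b" using Y_least[OF subY[OF b] _ x0_Y[OF b]] by blast
    then have "dd (Y a) \<le> dd (Y b)" by (rule dim_mono)
    then show False using \<open>dd (Y b) + 1 = dd (Y a)\<close> by simp
  qed
  have "dd (a \<inter> Y b) < dd a" using dim_psub[OF sub_inter[OF a subY[OF b]] a _ ne] by blast
  then have dle: "dd (a \<inter> Y b) \<le> dd b" using ba(2) by simp
  have "b \<subseteq> a \<inter> Y b" using ba(1) x_Y by blast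
  moreover note dle
  ultimately show "b = a \<inter> Y b" by (rule sub_eq_dim[OF b sub_inter[OF a subY[OF b]]])
qed

lemma E1_suf:
  assumes a: "sub a" and y: "sub y" "x0 \<subseteq> y" and c: "cov y (Y a)"
  shows "sub (a \<inter> y)" "cov (a \<inter> y) a" "Z (a \<inter> y) = Z a" "Y (a \<inter> y) = y"
proof -
  have yY: "y \<subseteq> Y a" "dd y + 1 = dd (Y a)" using c unfolding cov_def by auto
  show sb: "sub (a \<inter> y)" using sub_inter[OF a y(1)] .
  show zz: "Z (a \<inter> y) = Z a" using y(2) by blast
  have s1: "ssum a y \<subseteq> Y a" using ssum_least[OF subY[OF a] x_Y yY(1)] .
  have s2: "y \<subseteq> ssum a y" using ssum_ge2[OF a] .
  have s3: "ssum a y \<noteq> y"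
  proof
    assume "ssum a y = y"
    then have "a \<subseteq> y" using ssum_ge1[OF y(1), of a] by simp
    then have "Y a \<subseteq> y" using Y_least[OF y(1) _ y(2)] by blast
    then have "dd (Y a) \<le> dd y" by (rule dim_mono)
    then show False using yY(2) by simp
  qed
  have "dd y < dd (ssum a y)" using dim_psub[OF y(1) sub_ssum[OF a y(1)] s2 s3[symmetric]] .
  moreover have "dd (ssum a y) \<le> dd (Y a)" using dim_mono[OF s1] .
  moreover have "dd (ssum a y) + dd (a \<inter> y) = dd a + dd y" using dim_ssum[OF a y(1)] .
  ultimately have d: "dd (a \<inter> y) + 1 = dd a" using yY(2) by linarith
  show "cov (a \<inter> y) a" unfolding cov_def using d by auto
  have "Y (a \<inter> y) \<subseteq> y" using Y_least[OF y(1) _ y(2)] by blast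
  moreover have "dd y \<le> dd (Y (a \<inter> y))" using YZ[OF sb] YZ[OF a] arg_cong[OF zz, of dd] d yY(2) by linarith
  ultimately show "Y (a \<inter> y) = y" by (rule sub_eq_dim[OF subY[OF sb] y(1)])
qed

lemma E2_nec:
  assumes a: "sub a" and b: "sub b" and c: "cov b a" and y: "Y b = Y a"
  shows "cov (Z b) (Z a)"
proof -
  have ba: "b \<subseteq> a" "dd b + 1 = dd a" using c unfolding cov_def by auto
  have "dd (Z b) + 1 = dd (Z a)" using YZ[OF a] YZ[OF b] arg_cong[OF y, of dd] ba(2) by linarith
  then show ?thesis unfolding cov_def using ba(1) by auto
qed

lemma E2_set:
  assumes a: "sub a" and z: "sub z" "z \<subseteq> x0" and c: "cov z (Z a)"
  shows "{b. sub b \<and> cov b a \<and> Y b = Y a \<and> Z b = z} = {g\<in>hyp z a. \<not> Z a \<subseteq> g}"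
proof -
  have zz: "z \<subseteq> Z a" "dd z + 1 = dd (Z a)" using c unfolding cov_def by auto
  show ?thesis
  proof (intro set_eqI iffI)
    fix b assume "b \<in> {b. sub b \<and> cov b a \<and> Y b = Y a \<and> Z b = z}"
    then have b: "sub b" "cov b a" "Y b = Y a" "Z b = z" by auto
    have ba: "b \<subseteq> a" "dd b + 1 = dd a" using b(2) unfolding cov_def by auto
    have "\<not> Z a \<subseteq> b"
    proof
      assume "Z a \<subseteq> b"
      then have "Z a \<subseteq> z" using b(4) by blast
      then have "dd (Z a) \<le> dd z" by (rule dim_mono)
      then show False using zz(2) by simp
    qed
    then show "b \<in> {g\<in>hyp z a. \<not> Z a \<subseteq> g}" unfolding hyp_def using b ba by auto
  next
    fix g assume "g \<in> {g\<in>hyp z a. \<not> Z a \<subseteq> g}"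
    then have g: "sub g" "z \<subseteq> g" "g \<subseteq> a" "dd g + 1 = dd a" "\<not> Z a \<subseteq> g" unfolding hyp_def by auto
    have zg: "Z g = g \<inter> Z a" using g(3) by blast
    have "z \<subseteq> g \<inter> Z a" using g(2) zz(1) by blast
    moreover have "dd (g \<inter> Z a) \<le> dd z"
    proof -
      have "g \<inter> Z a \<noteq> Z a" using g(5) by blast
      then have "dd (g \<inter> Z a) < dd (Z a)" using dim_psub[OF sub_inter[OF g(1) subZ[OF a]] subZ[OF a]] by blast
      then show ?thesis using zz(2) by simp
    qed
    ultimately have gz: "Z g = z" unfolding zg by (rule sub_eq_dim[OF z(1) sub_inter[OF g(1) subZ[OF a]], symmetric])
    have "Y g \<subseteq> Y a" using Y_mono[OF g(3)] .
    moreover have "dd (Y a) \<le> dd (Y g)" using YZ[OF a] YZ[OF g(1)] arg_cong[OF gz, of dd] zz(2) g(4) by linarith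
    ultimately have "Y g = Y a" by (rule sub_eq_dim[OF subY[OF g(1)] subY[OF a]])
    then show "g \<in> {b. sub b \<and> cov b a \<and> Y b = Y a \<and> Z b = z}" using g gz unfolding cov_def by auto
  qed
qed

lemma F1_nec:
  assumes a: "sub a" and b: "sub b" and c: "cov a b" and z: "Z b = Z a"
  shows "cov (Y a) (Y b)"
proof -
  have ba: "a \<subseteq> b" "dd a + 1 = dd b" using c unfolding cov_def by auto
  have "dd (Y a) + 1 = dd (Y b)" using YZ[OF a] YZ[OF b] arg_cong[OF z, of dd] ba(2) by linarith
  then show ?thesis unfolding cov_def using Y_mono[OF ba(1)] by auto
qed

lemma F1_set:
  assumes a: "sub a" and y: "sub y" "x0 \<subseteq> y" and c: "cov (Y a) y"
  shows "{b. sub b \<and> cov a b \<and> Z b = Z a \<and> Y b = y} = {w\<in>up1 a y. \<not> w \<subseteq> Y a}"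
proof -
  have yy: "Y a \<subseteq> y" "dd (Y a) + 1 = dd y" using c unfolding cov_def by auto
  show ?thesis
  proof (intro set_eqI iffI)
    fix b assume "b \<in> {b. sub b \<and> cov a b \<and> Z b = Z a \<and> Y b = y}"
    then have b: "sub b" "cov a b" "Z b = Z a" "Y b = y" by auto
    have ab: "a \<subseteq> b" "dd a + 1 = dd b" using b(2) unfolding cov_def by auto
    have "\<not> b \<subseteq> Y a"
    proof
      assume "b \<subseteq> Y a"
      then have "Y b \<subseteq> Y a" using Y_least[OF subY[OF a] _ x0_Y[OF a]] by blast
      then have "dd (Y b) \<le> dd (Y a)" by (rule dim_mono)
      then show False using yy(2) b(4) by simp
    qed
    moreover have "b \<subseteq> y" using b(4) x_Y by blast
    ultimately show "b \<in> {w\<in>up1 a y. \<not> w \<subseteq> Y a}" unfolding up1_def using b ab by auto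
  next
    fix w assume "w \<in> {w\<in>up1 a y. \<not> w \<subseteq> Y a}"
    then have w: "sub w" "a \<subseteq> w" "w \<subseteq> y" "dd w = dd a + 1" "\<not> w \<subseteq> Y a" unfolding up1_def by auto
    have s1: "Y a \<subseteq> Y w" using Y_mono[OF w(2)] .
    have s2: "Y w \<subseteq> y" using Y_least[OF y(1) w(3) y(2)] .
    have "Y a \<noteq> Y w" using w(5) x_Y by blast
    then have "dd (Y a) < dd (Y w)" using dim_psub[OF subY[OF a] subY[OF w(1)] s1] by blast
    then have "dd y \<le> dd (Y w)" using yy(2) by simp
    then have yw: "Y w = y" by (rule sub_eq_dim[OF subY[OF w(1)] y(1) s2])
    have "Z a \<subseteq> Z w" using w(2) by blast
    moreover have "dd (Z w) \<le> dd (Z a)" using YZ[OF a] YZ[OF w(1)] arg_cong[OF yw, of dd] yy(2) w(4) by linarith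
    ultimately have "Z a = Z w" by (rule sub_eq_dim[OF subZ[OF a] subZ[OF w(1)]])
    then show "w \<in> {b. sub b \<and> cov a b \<and> Z b = Z a \<and> Y b = y}" using w yw unfolding cov_def by auto
  qed
qed

lemma F2_nec:
  assumes a: "sub a" and b: "sub b" and c: "cov a b" and y: "Y b = Y a"
  shows "cov (Z a) (Z b)"
proof -
  have ab: "a \<subseteq> b" "dd a + 1 = dd b" using c unfolding cov_def by auto
  have "dd (Z a) + 1 = dd (Z b)" using YZ[OF a] YZ[OF b] arg_cong[OF y, of dd] ab(2) by linarith
  moreover have "Z a \<subseteq> Z b" using ab(1) by blast
  ultimately show ?thesis unfolding cov_def by auto
qed

lemma F2_set:
  assumes a: "sub a" and z: "sub z" "z \<subseteq> x0" and c: "cov (Z a) z"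
  shows "{b. sub b \<and> cov a b \<and> Y b = Y a \<and> Z b = z} = {ssum a z}"
proof -
  have zz: "Z a \<subseteq> z" "dd (Z a) + 1 = dd z" using c unfolding cov_def by auto
  let ?b = "ssum a z"
  have sb: "sub ?b" using sub_ssum[OF a z(1)] .
  have az: "a \<inter> z = Z a" using zz(1) z(2) by blast
  have db: "dd ?b = dd a + 1" using dim_ssum[OF a z(1)] az zz(2) by simp
  have ab: "a \<subseteq> ?b" "z \<subseteq> ?b" using ssum_ge1[OF z(1)] ssum_ge2[OF a] by auto
  have "Y ?b \<subseteq> Y a" using Y_least[OF subY[OF a] _ x0_Y[OF a]] ssum_least[OF subY[OF a] x_Y] z(2) x0_Y[OF a] by blast
  moreover have "Y a \<subseteq> Y ?b" using Y_mono[OF ab(1)] .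
  ultimately have yb: "Y ?b = Y a" by blast
  have "z \<subseteq> Z ?b" using ab(2) z(2) by blast
  moreover have "dd (Z ?b) \<le> dd z" using YZ[OF a] YZ[OF sb] arg_cong[OF yb, of dd] zz(2) db by linarith
  ultimately have zb: "Z ?b = z" by (rule sub_eq_dim[OF z(1) subZ[OF sb], symmetric])
  show ?thesis
  proof (intro set_eqI iffI)
    fix b assume "b \<in> {b. sub b \<and> cov a b \<and> Y b = Y a \<and> Z b = z}"
    then have b: "sub b" "cov a b" "Y b = Y a" "Z b = z" by auto
    have abb: "a \<subseteq> b" "dd a + 1 = dd b" using b(2) unfolding cov_def by auto
    have "?b \<subseteq> b" using ssum_least[OF b(1) abb(1)] b(4) by blast
    moreover have "dd b \<le> dd ?b" using db abb(2) by simp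
    ultimately have "?b = b" by (rule sub_eq_dim[OF sb b(1)])
    then show "b \<in> {ssum a z}" by simp
  next
    fix b assume "b \<in> {ssum a z}"
    then show "b \<in> {b. sub b \<and> cov a b \<and> Y b = Y a \<and> Z b = z}"
      using sb ab db yb zb unfolding cov_def by auto
  qed
qed

end


context S0
begin

definition cls where "cls a = {b. sub b \<and> Y b = Y a \<and> Z b = Z a}"

lemma cls_dim: "sub a \<Longrightarrow> b \<in> cls a \<Longrightarrow> dd b = dd a"
proof -
  assume a: "sub a" and "b \<in> cls a"
  then have b: "sub b" "Y b = Y a" "Z b = Z a" unfolding cls_def by auto
  show "dd b = dd a" using YZ[OF a] YZ[OF b(1)] arg_cong[OF b(2), of dd] arg_cong[OF b(3), of dd] by linarith
qed

lemma self_cls: "sub a \<Longrightarrow> a \<in> cls a" unfolding cls_def by simp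

lemma cls_w_set:
  assumes a: "sub a" and w: "w \<in> up1 a (Y a)"
  shows "{b\<in>cls a. b \<subseteq> w} = {g\<in>hyp (Z a) w. \<not> (w \<inter> x0) \<subseteq> g}"
    and "dd (w \<inter> x0) = dd (Z a) + 1"
proof -
  have w': "sub w" "a \<subseteq> w" "w \<subseteq> Y a" "dd w = dd a + 1" using w unfolding up1_def by auto
  have yw: "Y w = Y a"
  proof -
    have "Y w \<subseteq> Y a" using Y_least[OF subY[OF a] w'(3) x0_Y[OF a]] .
    moreover have "Y a \<subseteq> Y w" using Y_mono[OF w'(2)] .
    ultimately show ?thesis by blast
  qed
  show dw: "dd (w \<inter> x0) = dd (Z a) + 1" using YZ[OF a] YZ[OF w'(1)] arg_cong[OF yw, of dd] w'(4) by linarith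
  show "{b\<in>cls a. b \<subseteq> w} = {g\<in>hyp (Z a) w. \<not> (w \<inter> x0) \<subseteq> g}"
  proof (intro set_eqI iffI)
    fix b assume "b \<in> {b\<in>cls a. b \<subseteq> w}"
    then have b: "sub b" "Y b = Y a" "Z b = Z a" "b \<subseteq> w" unfolding cls_def by auto
    have db: "dd b = dd a" using cls_dim[OF a] b unfolding cls_def by auto
    have "\<not> (w \<inter> x0) \<subseteq> b"
    proof
      assume "w \<inter> x0 \<subseteq> b"
      then have "w \<inter> x0 \<subseteq> Z a" using b(3) by blast
      then have "dd (w \<inter> x0) \<le> dd (Z a)" by (rule dim_mono)
      then show False using dw by simp
    qed
    moreover have "Z a \<subseteq> b" using b(3) by blast
    ultimately show "b \<in> {g\<in>hyp (Z a) w. \<not> (w \<inter> x0) \<subseteq> g}" unfolding hyp_def using b db w'(4) by auto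
  next
    fix g assume "g \<in> {g\<in>hyp (Z a) w. \<not> (w \<inter> x0) \<subseteq> g}"
    then have g: "sub g" "Z a \<subseteq> g" "g \<subseteq> w" "dd g + 1 = dd w" "\<not> (w \<inter> x0) \<subseteq> g" unfolding hyp_def by auto
    have "Z a \<subseteq> Z g" using g(2) by blast
    moreover have "dd (Z g) \<le> dd (Z a)"
    proof -
      have "Z g \<subseteq> w \<inter> x0" using g(3) by blast
      moreover have "Z g \<noteq> w \<inter> x0" using g(5) by blast
      ultimately have "dd (Z g) < dd (w \<inter> x0)" using dim_psub[OF subZ[OF g(1)] sub_inter[OF w'(1) s0]] by blast
      then show ?thesis using dw by simp
    qed
    ultimately have zg: "Z a = Z g" by (rule sub_eq_dim[OF subZ[OF a] subZ[OF g(1)]])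
    have "Y g \<subseteq> Y a" using Y_mono[OF g(3)] yw by blast
    moreover have "dd (Y a) \<le> dd (Y g)" using YZ[OF a] YZ[OF g(1)] arg_cong[OF zg, of dd] g(4) w'(4) by linarith
    ultimately have "Y g = Y a" by (rule sub_eq_dim[OF subY[OF g(1)] subY[OF a]])
    then show "g \<in> {b\<in>cls a. b \<subseteq> w}" unfolding cls_def using g zg by auto
  qed
qed

lemma cls_w_count:
  assumes a: "sub a" and w: "w \<in> up1 a (Y a)"
  shows "card {b\<in>cls a. b \<subseteq> w} = CARD('f) ^ (dd a - dd (Z a))"
proof -
  have w': "sub w" "a \<subseteq> w" "w \<subseteq> Y a" "dd w = dd a + 1" using w unfolding up1_def by auto
  have "card {b\<in>cls a. b \<subseteq> w} = CARD('f) ^ (dd w - dd (w \<inter> x0))"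
    unfolding cls_w_set(1)[OF a w]
    by (rule hyp_not_count) (use subZ[OF a] sub_inter[OF w'(1) s0] w' cls_w_set(2)[OF a w] in auto)
  then show ?thesis using cls_w_set(2)[OF a w] w'(4) by simp
qed

lemma up1_w:
  assumes a: "sub a" and b: "b \<in> cls a" "b \<noteq> a" and w: "w \<in> up1 a (Y a)" "b \<subseteq> w"
  shows "w = ssum a b"
proof -
  have w': "sub w" "a \<subseteq> w" "w \<subseteq> Y a" "dd w = dd a + 1" using w unfolding up1_def by auto
  have sb: "sub b" using b unfolding cls_def by auto
  have s: "ssum a b \<subseteq> w" using ssum_least[OF w'(1) w'(2) w(2)] .
  have "ssum a b \<noteq> a"
  proof
    assume "ssum a b = a"
    then have "b \<subseteq> a" using ssum_ge2[OF a, of b] by simp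
    moreover have "dd a \<le> dd b" using cls_dim[OF a b(1)] by simp
    ultimately have "b = a" by (rule sub_eq_dim[OF sb a])
    then show False using b(2) by simp
  qed
  then have "dd a < dd (ssum a b)" using dim_psub[OF a sub_ssum[OF a sb] ssum_ge1[OF sb]] by auto
  then have "dd w \<le> dd (ssum a b)" using w'(4) by simp
  then show ?thesis using sub_eq_dim[OF sub_ssum[OF a sb] w'(1) s] by simp
qed

lemma rank1_w:
  assumes a: "sub a" and b: "b \<in> cls a" and d: "dd (ssum a b) = dd a + 1"
  shows "ssum a b \<in> up1 a (Y a)" "b \<noteq> a" "b \<subseteq> ssum a b"
proof -
  have b': "sub b" "Y b = Y a" using b unfolding cls_def by auto
  have "ssum a b \<subseteq> Y a" using ssum_least[OF subY[OF a] x_Y] x_Y[of b] b'(2) by blast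
  then show "ssum a b \<in> up1 a (Y a)" unfolding up1_def
    using sub_ssum[OF a b'(1)] ssum_ge1[OF b'(1)] d by auto
  show "b \<noteq> a"
  proof
    assume "b = a"
    then have "ssum a b = a" using ssum_absorb[OF a a] by simp
    then show False using d by simp
  qed
  show "b \<subseteq> ssum a b" using ssum_ge2[OF a] .
qed

end


lemma ring_aux2:
  fixes c Q M N :: int
  assumes "c * (Q - 1) = N - 1"
  shows "c * (M - 1) * (Q - 1) + (M + N - 1) = M * N"
proof -
  have "c * (M - 1) * (Q - 1) = (M - 1) * (c * (Q - 1))" by (simp add: algebra_simps)
  also have "\<dots> = (M - 1) * (N - 1)" using assms by simp
  finally show ?thesis by (simp add: algebra_simps)
qed

context S0
begin

lemma N1_count:
  assumes a: "sub a"
  shows "card {b\<in>cls a. dd (ssum a b) = dd a + 1} = card (up1 a (Y a)) * (CARD('f) ^ (dd a - dd (Z a)) - 1)"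
proof -
  let ?W = "up1 a (Y a)"
  let ?A = "\<lambda>w. {b\<in>cls a. b \<subseteq> w} - {a}"
  have eq: "{b\<in>cls a. dd (ssum a b) = dd a + 1} = (\<Union>w\<in>?W. ?A w)"
  proof (intro set_eqI iffI)
    fix b assume "b \<in> {b\<in>cls a. dd (ssum a b) = dd a + 1}"
    then have b: "b \<in> cls a" "dd (ssum a b) = dd a + 1" by auto
    show "b \<in> (\<Union>w\<in>?W. ?A w)" using rank1_w[OF a b] b(1) by blast
  next
    fix b assume "b \<in> (\<Union>w\<in>?W. ?A w)"
    then obtain w where w: "w \<in> ?W" "b \<in> cls a" "b \<subseteq> w" "b \<noteq> a" by blast
    have "w = ssum a b" using up1_w[OF a w(2,4,1,3)] .
    then have "dd (ssum a b) = dd a + 1" using w(1) unfolding up1_def by auto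
    then show "b \<in> {b\<in>cls a. dd (ssum a b) = dd a + 1}" using w(2) by auto
  qed
  have disj: "\<forall>w1\<in>?W. \<forall>w2\<in>?W. w1 \<noteq> w2 \<longrightarrow> ?A w1 \<inter> ?A w2 = {}"
  proof (intro ballI impI)
    fix w1 w2 assume w1: "w1 \<in> ?W" and w2: "w2 \<in> ?W" and ne: "w1 \<noteq> w2"
    show "?A w1 \<inter> ?A w2 = {}"
    proof (rule ccontr)
      assume "?A w1 \<inter> ?A w2 \<noteq> {}"
      then obtain b where b: "b \<in> cls a" "b \<noteq> a" "b \<subseteq> w1" "b \<subseteq> w2" by blast
      have "w1 = ssum a b" using up1_w[OF a b(1,2) w1 b(3)] .
      moreover have "w2 = ssum a b" using up1_w[OF a b(1,2) w2 b(4)] .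
      ultimately show False using ne by simp
    qed
  qed
  have c: "\<And>w. w \<in> ?W \<Longrightarrow> card (?A w) = CARD('f) ^ (dd a - dd (Z a)) - 1"
  proof -
    fix w assume w: "w \<in> ?W"
    have "a \<in> {b\<in>cls a. b \<subseteq> w}" using self_cls[OF a] w unfolding up1_def by auto
    then show "card (?A w) = CARD('f) ^ (dd a - dd (Z a)) - 1"
      using cls_w_count[OF a w] by (simp add: card_Diff_singleton)
  qed
  have "card (\<Union>w\<in>?W. ?A w) = (\<Sum>w\<in>?W. card (?A w))"
    by (rule card_UN_disjoint) (use disj in auto)
  also have "\<dots> = (\<Sum>w\<in>?W. CARD('f) ^ (dd a - dd (Z a)) - 1)" using c by (rule sum.cong[OF refl])
  finally show ?thesis unfolding eq by simp
qed

lemma top_row: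
  assumes a: "sub a"
  shows "int (card {b\<in>cls a. dd (ssum a b) = dd a + 1}) * (int CARD('f) - 1)
         + (int CARD('f) ^ (dd a - dd (Z a)) + int CARD('f) ^ (dd (Y a) - dd a) - 1)
       = int CARD('f) ^ (dd (Y a) - dd (Z a))"
proof -
  let ?Q = "int CARD('f)"
  define m where "m = dd a - dd (Z a)"
  define n where "n = dd (Y a) - dd a"
  have mn: "dd (Y a) - dd (Z a) = m + n" "dd (Y a) = dd a + n" "dd a = dd (Z a) + m"
    unfolding m_def n_def using YZ[OF a] dim_mono[OF x_Y[of a]] dim_mono[of "Z a" a] by auto
  have u: "int (card (up1 a (Y a))) * (?Q - 1) * ?Q ^ dd a = ?Q ^ dd (Y a) - ?Q ^ dd a"
    using up1_count_int[OF a subY[OF a] x_Y] .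
  have "?Q ^ dd (Y a) = ?Q ^ dd a * ?Q ^ n" using mn(2) by (simp add: power_add)
  then have "(int (card (up1 a (Y a))) * (?Q - 1)) * ?Q ^ dd a = (?Q ^ n - 1) * ?Q ^ dd a"
    using u by (simp add: algebra_simps)
  moreover have "?Q ^ dd a \<noteq> 0" using Q_ge2[where 'f='f] by simp
  ultimately have u2: "int (card (up1 a (Y a))) * (?Q - 1) = ?Q ^ n - 1" by simp
  have "CARD('f) ^ m \<ge> 1" using Q_ge2[where 'f='f] by simp
  then have N: "int (card {b\<in>cls a. dd (ssum a b) = dd a + 1}) = int (card (up1 a (Y a))) * (?Q ^ m - 1)"
    using N1_count[OF a] unfolding m_def[symmetric] by (simp add: of_nat_diff)
  show ?thesis unfolding N mn(1) m_def[symmetric] n_def[symmetric] power_add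
    by (rule ring_aux2[OF u2])
qed

end


locale S01 = S0 x0 for x0 :: "('f::{field,finite}^'n) set" +
  fixes x1 :: "('f^'n) set"
  assumes s1: "sub x1" and disj: "x0 \<inter> x1 = {0}" and full: "ssum x0 x1 = UNIV"
begin

lemma proj0_spec: "proj0 x0 x1 t \<in> x0 \<and> t - proj0 x0 x1 t \<in> x1"
proof -
  have "t \<in> ssum x0 x1" using full by simp
  then obtain p r where pr: "p \<in> x0" "r \<in> x1" "t = p + r" by (rule ssum_memE)
  have ex: "p \<in> x0 \<and> t - p \<in> x1" using pr by simp
  have un: "\<And>p'. p' \<in> x0 \<and> t - p' \<in> x1 \<Longrightarrow> p' = p"
  proof -
    fix p' assume h: "p' \<in> x0 \<and> t - p' \<in> x1"
    have "p' - p \<in> x0" using vec.subspace_diff[OF s0, of p' p] h pr(1) by simp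
    moreover have "(t - p) - (t - p') \<in> x1" using vec.subspace_diff[OF s1, of "t - p" "t - p'"] h ex by simp
    then have "p' - p \<in> x1" by simp
    ultimately have "p' - p \<in> x0 \<inter> x1" by blast
    then show "p' = p" using disj by simp
  qed
  have "proj0 x0 x1 t = p" unfolding proj0_def by (rule the_equality[where P="\<lambda>a. a \<in> x0 \<and> t - a \<in> x1", OF ex un])
  then show ?thesis using ex by simp
qed

lemma proj0_diff:
  assumes "t - t' \<in> x0"
  shows "proj0 x0 x1 t - proj0 x0 x1 t' = t - t'"
proof -
  let ?p = "proj0 x0 x1 t" and ?p' = "proj0 x0 x1 t'"
  have "?p - ?p' \<in> x0" using vec.subspace_diff[OF s0, of ?p ?p'] proj0_spec[of t] proj0_spec[of t'] by simp
  with assms have a: "(t - t') - (?p - ?p') \<in> x0" by (rule vec.subspace_diff[OF s0])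
  have eq: "(t - t') - (?p - ?p') = (t - ?p) - (t' - ?p')" by (simp add: algebra_simps)
  have mem: "(t - ?p) - (t' - ?p') \<in> x1"
    using vec.subspace_diff[OF s1, of "t - ?p" "t' - ?p'"] proj0_spec[of t] proj0_spec[of t'] by simp
  have b: "(t - t') - (?p - ?p') \<in> x1" unfolding eq by (rule mem)
  have "(t - t') - (?p - ?p') \<in> x0 \<inter> x1" using a b by blast
  then show ?thesis using disj by simp
qed

lemma tau_some:
  assumes x: "sub x" and w: "w \<in> Y x"
  shows "(SOME u. u \<in> x \<and> u - w \<in> x0) \<in> x \<and> (SOME u. u \<in> x \<and> u - w \<in> x0) - w \<in> x0"
proof (rule someI_ex)
  obtain p r where pr: "p \<in> x" "r \<in> x0" "w = p + r" using w by (rule ssum_memE)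
  have "p - w \<in> x0" using pr vec.subspace_neg[OF s0] by simp
  then show "\<exists>u. u \<in> x \<and> u - w \<in> x0" using pr(1) by blast
qed

lemma tau_diff:
  assumes a: "sub a" and b: "sub b" and w: "w \<in> Y a" and yb: "Y b = Y a"
  shows "\<exists>u u'. u \<in> a \<and> u - w \<in> x0 \<and> u' \<in> b \<and> u' - w \<in> x0 \<and> tau x0 x1 b w - tau x0 x1 a w = u' - u"
proof -
  let ?u = "SOME u. u \<in> a \<and> u - w \<in> x0" and ?u' = "SOME u. u \<in> b \<and> u - w \<in> x0"
  have u: "?u \<in> a" "?u - w \<in> x0" using tau_some[OF a w] by auto
  have u': "?u' \<in> b" "?u' - w \<in> x0" using tau_some[OF b] w yb by auto
  have "(?u' - w) - (?u - w) \<in> x0" using u'(2) u(2) by (rule vec.subspace_diff[OF s0])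
  then have "?u' - ?u \<in> x0" by simp
  then have "tau x0 x1 b w - tau x0 x1 a w = ?u' - ?u" unfolding tau_def by (rule proj0_diff)
  then show ?thesis using u u' by blast
qed

lemma tau_image:
  assumes a: "sub a" and b: "sub b" and yb: "Y b = Y a" and zb: "Z b = Z a"
  shows "ssum ((\<lambda>w. tau x0 x1 b w - tau x0 x1 a w) ` Y a) (Z a) = ssum a b \<inter> x0"
proof (intro set_eqI iffI)
  fix t assume "t \<in> ssum ((\<lambda>w. tau x0 x1 b w - tau x0 x1 a w) ` Y a) (Z a)"
  then obtain w s where ws: "w \<in> Y a" "s \<in> Z a" "t = (tau x0 x1 b w - tau x0 x1 a w) + s"
    unfolding ssum_def by blast
  obtain u u' where uu: "u \<in> a" "u - w \<in> x0" "u' \<in> b" "u' - w \<in> x0"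
      "tau x0 x1 b w - tau x0 x1 a w = u' - u"
    using tau_diff[OF a b ws(1) yb] by blast
  have t: "t = (s - u) + u'" using ws(3) uu(5) by (simp add: algebra_simps)
  have "s - u \<in> a" using ws(2) uu(1) vec.subspace_diff[OF a] by blast
  then have "t \<in> ssum a b" unfolding t by (rule ssum_mem[OF _ uu(3)])
  moreover have "t \<in> x0"
  proof -
    have "(u' - w) - (u - w) \<in> x0" using uu(4) uu(2) by (rule vec.subspace_diff[OF s0])
    then have "u' - u \<in> x0" by simp
    moreover have "s \<in> x0" using ws(2) by blast
    ultimately have "(u' - u) + s \<in> x0" by (rule vec.subspace_add[OF s0])
    then show ?thesis using ws(3) uu(5) by simp
  qed
  ultimately show "t \<in> ssum a b \<inter> x0" by blast
next
  fix t assume "t \<in> ssum a b \<inter> x0"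
  then obtain p r where pr: "p \<in> a" "r \<in> b" "t = p + r" "t \<in> x0" unfolding ssum_def by blast
  let ?w = "- p"
  have w: "?w \<in> Y a" using x_Y[of a] pr(1) vec.subspace_neg[OF a] by blast
  obtain u u' where uu: "u \<in> a" "u - ?w \<in> x0" "u' \<in> b" "u' - ?w \<in> x0"
      "tau x0 x1 b ?w - tau x0 x1 a ?w = u' - u"
    using tau_diff[OF a b w yb] by blast
  have "u + p \<in> a" using uu(1) pr(1) vec.subspace_add[OF a] by blast
  moreover have "u + p \<in> x0" using uu(2) by simp
  ultimately have s1': "u + p \<in> Z a" by blast
  have eq: "u' - r = (u' - ?w) - t" using pr(3) by (simp add: algebra_simps)
  have mem: "(u' - ?w) - t \<in> x0" using uu(4) pr(4) by (rule vec.subspace_diff[OF s0])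
  have "u' - r \<in> x0" unfolding eq by (rule mem)
  moreover have "u' - r \<in> b" using uu(3) pr(2) vec.subspace_diff[OF b] by blast
  ultimately have "u' - r \<in> Z a" using zb by blast
  then have s: "(u + p) - (u' - r) \<in> Z a" using s1' vec.subspace_diff[OF subZ[OF a]] by blast
  have teq: "t = (tau x0 x1 b ?w - tau x0 x1 a ?w) + ((u + p) - (u' - r))"
    unfolding uu(5) pr(3) by (simp add: algebra_simps)
  show "t \<in> ssum ((\<lambda>w. tau x0 x1 b w - tau x0 x1 a w) ` Y a) (Z a)"
    by (subst teq, rule ssum_mem[OF imageI[OF w] s])
qed

lemma rank_formula:
  assumes a: "sub a" and b: "sub b" and yb: "Y b = Y a" and zb: "Z b = Z a"
  shows "rank_tau_diff x0 x1 a b = dd (ssum a b) - dd a"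
proof -
  have r: "rank_tau_diff x0 x1 a b = dd (ssum a b \<inter> x0) - dd (Z a)"
    unfolding rank_tau_diff_def tau_image[OF assms] ..
  have sab: "sub (ssum a b)" using sub_ssum[OF a b] .
  have "Y (ssum a b) = Y a"
  proof
    have "ssum a b \<subseteq> Y a" using ssum_least[OF subY[OF a] x_Y] x_Y[of b] yb by blast
    then show "Y (ssum a b) \<subseteq> Y a" using Y_least[OF subY[OF a] _ x0_Y[OF a]] by blast
    show "Y a \<subseteq> Y (ssum a b)" using Y_mono[OF ssum_ge1[OF b]] .
  qed
  then have "dd (Y a) + dd (ssum a b \<inter> x0) = dd (ssum a b) + dd x0" using YZ[OF sab] by simp
  moreover have "dd a \<le> dd (ssum a b)" using dim_mono[OF ssum_ge1[OF b]] .
  ultimately show ?thesis unfolding r using YZ[OF a] by linarith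
qed

end


lemma mop_comp: "mop A (mop B v) = mop (\<lambda>a c. \<Sum>b\<in>UNIV. B a b * A b c) v"
proof
  fix y
  have "mop A (mop B v) y = (\<Sum>x\<in>UNIV. (\<Sum>w\<in>UNIV. v w * B w x) * A x y)" unfolding mop_def ..
  also have "\<dots> = (\<Sum>x\<in>UNIV. \<Sum>w\<in>UNIV. v w * (B w x * A x y))"
    by (simp add: sum_distrib_right mult.assoc)
  also have "\<dots> = (\<Sum>w\<in>UNIV. \<Sum>x\<in>UNIV. v w * (B w x * A x y))" by (rule sum.swap)
  also have "\<dots> = (\<Sum>w\<in>UNIV. v w * (\<Sum>x\<in>UNIV. B w x * A x y))" by (simp add: sum_distrib_left)
  finally show "mop A (mop B v) y = mop (\<lambda>a c. \<Sum>b\<in>UNIV. B a b * A b c) v y" unfolding mop_def .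
qed

lemma scop_mop: "scop c (mop M) = mop (\<lambda>a b. c * M a b)"
  unfolding scop_def mop_def by (simp add: sum_distrib_left mult.left_commute)

lemma diag_right:
  fixes d :: "('f::{field,finite}^'n) set \<Rightarrow> complex"
  shows "(\<lambda>a c. \<Sum>b\<in>UNIV. B a b * diagm d b c) = (\<lambda>a c. B a c * (if c \<in> Lsub then d c else 0))"
proof (intro ext)
  fix a c
  have "(\<Sum>b\<in>UNIV. B a b * diagm d b c) = (\<Sum>b\<in>UNIV. if b = c then B a c * (if c \<in> Lsub then d c else 0) else 0)"
    unfolding diagm_def by (rule sum.cong) auto
  also have "\<dots> = B a c * (if c \<in> Lsub then d c else 0)" by (subst sum.delta) simp_all
  finally show "(\<Sum>b\<in>UNIV. B a b * diagm d b c) = B a c * (if c \<in> Lsub then d c else 0)" .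
qed

lemma diag_left:
  fixes d :: "('f::{field,finite}^'n) set \<Rightarrow> complex"
  shows "(\<lambda>a c. \<Sum>b\<in>UNIV. diagm d a b * A b c) = (\<lambda>a c. (if a \<in> Lsub then d a else 0) * A a c)"
proof (intro ext)
  fix a c
  have "(\<Sum>b\<in>UNIV. diagm d a b * A b c) = (\<Sum>b\<in>UNIV. if b = a then (if a \<in> Lsub then d a else 0) * A a c else 0)"
    unfolding diagm_def by (rule sum.cong) auto
  also have "\<dots> = (if a \<in> Lsub then d a else 0) * A a c" by (subst sum.delta) simp_all
  finally show "(\<Sum>b\<in>UNIV. diagm d a b * A b c) = (if a \<in> Lsub then d a else 0) * A a c" .
qed

lemma sum_ind: "finite S \<Longrightarrow> (\<Sum>b\<in>S. if P b then (1::complex) else 0) = of_nat (card {b\<in>S. P b})"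
  by (simp add: sum.inter_filter[symmetric])

lemma Vspace_mop: "(\<And>a b. b \<notin> Lsub \<Longrightarrow> M a b = 0) \<Longrightarrow> mop M v \<in> Vspace"
  unfolding Vspace_def mop_def by simp

context S0
begin

definition colsum :: "(('f^'n) set \<Rightarrow> ('f^'n) set \<Rightarrow> complex) \<Rightarrow> ('f^'n) set \<Rightarrow> ('f^'n) set \<Rightarrow> ('f^'n) set \<Rightarrow> complex" where
  "colsum M a y z = (\<Sum>b\<in>Lsub. M a b * (if y = Y b \<and> z = Z b then 1 else 0))"

lemma iota_mop:
  assumes v: "v \<in> Vspace"
  shows "iota x0 (mop M v) (y, z) = (\<Sum>a\<in>Lsub. v a * colsum M a y z)"
proof -
  have "iota x0 (mop M v) (y, z) = (\<Sum>b\<in>Lsub. (\<Sum>a\<in>UNIV. v a * M a b) * (if y = Y b \<and> z = Z b then 1 else 0))"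
    unfolding iota_def mop_def by simp
  also have "\<dots> = (\<Sum>b\<in>Lsub. (\<Sum>a\<in>Lsub. v a * M a b) * (if y = Y b \<and> z = Z b then 1 else 0))"
  proof (rule sum.cong[OF refl])
    fix b
    have "(\<Sum>a\<in>UNIV. v a * M a b) = (\<Sum>a\<in>Lsub. v a * M a b)"
      by (rule sum.mono_neutral_right) (use v in \<open>auto simp: Vspace_def\<close>)
    then show "(\<Sum>a\<in>UNIV. v a * M a b) * (if y = Y b \<and> z = Z b then 1 else 0)
        = (\<Sum>a\<in>Lsub. v a * M a b) * (if y = Y b \<and> z = Z b then 1 else 0)" by simp
  qed
  also have "\<dots> = (\<Sum>b\<in>Lsub. \<Sum>a\<in>Lsub. v a * (M a b * (if y = Y b \<and> z = Z b then 1 else 0)))"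
    by (simp add: sum_distrib_right mult.assoc)
  also have "\<dots> = (\<Sum>a\<in>Lsub. \<Sum>b\<in>Lsub. v a * (M a b * (if y = Y b \<and> z = Z b then 1 else 0)))"
    by (rule sum.swap)
  also have "\<dots> = (\<Sum>a\<in>Lsub. v a * colsum M a y z)"
    unfolding colsum_def by (simp add: sum_distrib_left)
  finally show ?thesis .
qed

lemma tens_TL:
  "tens_act M1 M2 (TL u) (iota x0 v) (y, z) = (\<Sum>a\<in>Lsub. v a * ((if z = Z a then 1 else 0) * M1 u (Y a) y))"
proof -
  have "tens_act M1 M2 (TL u) (iota x0 v) (y, z)
      = (\<Sum>y'\<in>UNIV. (\<Sum>a\<in>Lsub. v a * (if y' = Y a \<and> z = Z a then 1 else 0)) * M1 u y' y)"
    unfolding iota_def by simp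
  also have "\<dots> = (\<Sum>y'\<in>UNIV. \<Sum>a\<in>Lsub. v a * ((if y' = Y a \<and> z = Z a then 1 else 0) * M1 u y' y))"
    by (simp add: sum_distrib_right mult.assoc)
  also have "\<dots> = (\<Sum>a\<in>Lsub. \<Sum>y'\<in>UNIV. v a * ((if y' = Y a \<and> z = Z a then 1 else 0) * M1 u y' y))"
    by (rule sum.swap)
  also have "\<dots> = (\<Sum>a\<in>Lsub. v a * ((if z = Z a then 1 else 0) * M1 u (Y a) y))"
  proof (rule sum.cong[OF refl])
    fix a
    have "(\<Sum>y'\<in>UNIV. v a * ((if y' = Y a \<and> z = Z a then 1 else 0) * M1 u y' y))
        = (\<Sum>y'\<in>UNIV. if y' = Y a then v a * ((if z = Z a then 1 else 0) * M1 u (Y a) y) else 0)"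
      by (rule sum.cong) auto
    then show "(\<Sum>y'\<in>UNIV. v a * ((if y' = Y a \<and> z = Z a then 1 else 0) * M1 u y' y))
        = v a * ((if z = Z a then 1 else 0) * M1 u (Y a) y)" by simp
  qed
  finally show ?thesis .
qed

lemma tens_TR:
  "tens_act M1 M2 (TR u) (iota x0 v) (y, z) = (\<Sum>a\<in>Lsub. v a * ((if y = Y a then 1 else 0) * M2 u (Z a) z))"
proof -
  have "tens_act M1 M2 (TR u) (iota x0 v) (y, z)
      = (\<Sum>z'\<in>UNIV. (\<Sum>a\<in>Lsub. v a * (if y = Y a \<and> z' = Z a then 1 else 0)) * M2 u z' z)"
    unfolding iota_def by simp
  also have "\<dots> = (\<Sum>z'\<in>UNIV. \<Sum>a\<in>Lsub. v a * ((if y = Y a \<and> z' = Z a then 1 else 0) * M2 u z' z))"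
    by (simp add: sum_distrib_right mult.assoc)
  also have "\<dots> = (\<Sum>a\<in>Lsub. \<Sum>z'\<in>UNIV. v a * ((if y = Y a \<and> z' = Z a then 1 else 0) * M2 u z' z))"
    by (rule sum.swap)
  also have "\<dots> = (\<Sum>a\<in>Lsub. v a * ((if y = Y a then 1 else 0) * M2 u (Z a) z))"
  proof (rule sum.cong[OF refl])
    fix a
    have "(\<Sum>z'\<in>UNIV. v a * ((if y = Y a \<and> z' = Z a then 1 else 0) * M2 u z' z))
        = (\<Sum>z'\<in>UNIV. if z' = Z a then v a * ((if y = Y a then 1 else 0) * M2 u (Z a) z) else 0)"
      by (rule sum.cong) auto
    then show "(\<Sum>z'\<in>UNIV. v a * ((if y = Y a \<and> z' = Z a then 1 else 0) * M2 u z' z))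
        = v a * ((if y = Y a then 1 else 0) * M2 u (Z a) z)" by simp
  qed
  finally show ?thesis .
qed

lemma gen_TL:
  assumes v: "v \<in> Vspace"
    and h: "\<And>a y z. a \<in> Lsub \<Longrightarrow> colsum M a y z = (if z = Z a then 1 else 0) * M1 u (Y a) y"
  shows "iota x0 (mop M v) = tens_act M1 M2 (TL u) (iota x0 v)"
proof
  fix p :: "('f^'n) set \<times> ('f^'n) set"
  obtain y z where p: "p = (y, z)" by fastforce
  show "iota x0 (mop M v) p = tens_act M1 M2 (TL u) (iota x0 v) p"
    unfolding p iota_mop[OF v] tens_TL by (rule sum.cong[OF refl]) (simp add: h)
qed

lemma gen_TR:
  assumes v: "v \<in> Vspace"
    and h: "\<And>a y z. a \<in> Lsub \<Longrightarrow> colsum M a y z = (if y = Y a then 1 else 0) * M2 u (Z a) z"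
  shows "iota x0 (mop M v) = tens_act M1 M2 (TR u) (iota x0 v)"
proof
  fix p :: "('f^'n) set \<times> ('f^'n) set"
  obtain y z where p: "p = (y, z)" by fastforce
  show "iota x0 (mop M v) p = tens_act M1 M2 (TR u) (iota x0 v) p"
    unfolding p iota_mop[OF v] tens_TR by (rule sum.cong[OF refl]) (simp add: h)
qed

end


definition qv :: "'f::finite itself \<Rightarrow> complex" where
  "qv _ = complex_of_real (sqrt (real CARD('f)))"

context S0
begin

lemma q_nz: "qv TYPE('f) \<noteq> 0" unfolding qv_def using Q_ge2[where 'f='f] by simp

lemma q_sq: "qv TYPE('f) ^ 2 = of_nat CARD('f)"
proof -
  have "(sqrt (real CARD('f)))^2 = real CARD('f)" by simp
  then have "complex_of_real ((sqrt (real CARD('f)))^2) = of_nat CARD('f)" by simp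
  then show ?thesis unfolding qv_def by (simp only: of_real_power)
qed

lemma q_pow2: "qv TYPE('f) powi (2 * int k) = of_nat (CARD('f) ^ k)"
proof -
  have "qv TYPE('f) powi (2 * int k) = qv TYPE('f) powi (int (2 * k))" by simp
  also have "\<dots> = qv TYPE('f) ^ (2 * k)" by (simp only: power_int_of_nat)
  also have "\<dots> = (qv TYPE('f) ^ 2) ^ k" by (simp add: power_mult)
  finally show ?thesis using q_sq by simp
qed

lemma powi_add: "qv TYPE('f) powi i * qv TYPE('f) powi j = qv TYPE('f) powi (i + j)"
  using power_int_add[of "qv TYPE('f)" i j] q_nz by simp

lemma colsum_card:
  assumes a: "a \<in> Lsub" and M: "\<And>b. M a b = c * (if b \<in> Lsub \<and> P b then 1 else 0)"
  shows "colsum M a y z = c * of_nat (card {b. sub b \<and> P b \<and> y = Y b \<and> z = Z b})"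
proof -
  have "colsum M a y z = (\<Sum>b\<in>Lsub. c * (if P b \<and> y = Y b \<and> z = Z b then 1 else 0))"
    unfolding colsum_def M by (rule sum.cong) auto
  also have "\<dots> = c * (\<Sum>b\<in>Lsub. if P b \<and> y = Y b \<and> z = Z b then 1 else 0)"
    by (simp add: sum_distrib_left)
  also have "\<dots> = c * of_nat (card {b\<in>Lsub. P b \<and> y = Y b \<and> z = Z b})"
    by (subst sum_ind) simp_all
  finally show ?thesis unfolding Lsub_def by simp
qed

lemma colsum_diag:
  assumes a: "a \<in> Lsub"
  shows "colsum (diagm d) a y z = d a * (if y = Y a \<and> z = Z a then 1 else 0)"
proof -
  have "colsum (diagm d) a y z = (\<Sum>b\<in>Lsub. if b = a then d a * (if y = Y a \<and> z = Z a then 1 else 0) else 0)"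
    unfolding colsum_def diagm_def by (rule sum.cong) (use a in auto)
  also have "\<dots> = d a * (if y = Y a \<and> z = Z a then 1 else 0)" using a by (subst sum.delta) simp_all
  finally show ?thesis .
qed

lemma sub_Lsub: "x \<in> Lsub \<longleftrightarrow> sub x" unfolding Lsub_def by simp

lemma Ya_Lint: "sub a \<Longrightarrow> Y a \<in> Lint x0 UNIV"
  unfolding Lint_def using subY x0_Y by auto

lemma Za_Lint: "sub a \<Longrightarrow> Z a \<in> Lint {0} x0"
  unfolding Lint_def using subZ vec.subspace_0 s0 by auto

lemma Lint0: "z \<in> Lint {0} x0 \<longleftrightarrow> sub z \<and> z \<subseteq> x0"
  unfolding Lint_def using vec.subspace_0 by auto

lemma LintU: "y \<in> Lint x0 UNIV \<longleftrightarrow> sub y \<and> x0 \<subseteq> y"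
  unfolding Lint_def by auto

lemma dim0: "dd ({0} :: ('f^'n) set) = 0" by simp

end


context S0
begin

lemma E1_card:
  assumes a: "sub a"
  shows "card {b. sub b \<and> (cov b a \<and> Z b = Z a) \<and> y = Y b \<and> z = Z b}
       = (if z = Z a \<and> sub y \<and> x0 \<subseteq> y \<and> cov y (Y a) then 1 else 0)"
proof (cases "z = Z a \<and> sub y \<and> x0 \<subseteq> y \<and> cov y (Y a)")
  case True
  have "{b. sub b \<and> (cov b a \<and> Z b = Z a) \<and> y = Y b \<and> z = Z b} = {a \<inter> y}"
  proof (intro set_eqI iffI)
    fix b assume "b \<in> {b. sub b \<and> (cov b a \<and> Z b = Z a) \<and> y = Y b \<and> z = Z b}"
    then have b: "sub b" "cov b a" "Z b = Z a" "y = Y b" by auto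
    show "b \<in> {a \<inter> y}" using E1_nec(2)[OF a b(1,2,3)] b(4) by simp
  next
    fix b assume "b \<in> {a \<inter> y}"
    then show "b \<in> {b. sub b \<and> (cov b a \<and> Z b = Z a) \<and> y = Y b \<and> z = Z b}"
      using E1_suf[OF a] True by auto
  qed
  then show ?thesis using True by simp
next
  case False
  have e: "{b. sub b \<and> (cov b a \<and> Z b = Z a) \<and> y = Y b \<and> z = Z b} = {}"
  proof (rule ccontr)
    assume "{b. sub b \<and> (cov b a \<and> Z b = Z a) \<and> y = Y b \<and> z = Z b} \<noteq> {}"
    then obtain b where b: "sub b" "cov b a" "Z b = Z a" "y = Y b" "z = Z b" by blast
    have "cov y (Y a)" using E1_nec(1)[OF a b(1,2,3)] b(4) by simp
    then show False using False b subY[OF b(1)] x0_Y[OF b(1)] by auto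
  qed
  show ?thesis unfolding e using False by simp
qed

lemma E1_col:
  assumes a: "a \<in> Lsub"
  shows "colsum (\<lambda>a b. qv TYPE('f) powi (int (dd x0) - Dim TYPE('f) TYPE('n)) * L1 x0 a b) a y z
       = (if z = Z a then 1 else 0) * Umat (qv TYPE('f)) 1 x0 UNIV UE (Y a) y"
proof -
  let ?c = "qv TYPE('f) powi (int (dd x0) - Dim TYPE('f) TYPE('n))"
  have sa: "sub a" using a sub_Lsub by blast
  have "colsum (\<lambda>a b. ?c * L1 x0 a b) a y z
      = ?c * of_nat (card {b. sub b \<and> (cov b a \<and> Z b = Z a) \<and> y = Y b \<and> z = Z b})"
    by (rule colsum_card[OF a]) (use a in \<open>simp add: L1_def\<close>)
  also have "\<dots> = (if z = Z a \<and> sub y \<and> x0 \<subseteq> y \<and> cov y (Y a) then ?c else 0)"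
    unfolding E1_card[OF sa] by simp
  also have "\<dots> = (if z = Z a then 1 else 0) * Umat (qv TYPE('f)) 1 x0 UNIV UE (Y a) y"
    using Ya_Lint[OF sa] LintU[of y] by (simp add: rdim_def Dim_def)
  finally show ?thesis .
qed

lemma prod3: "i + j + k = 0 \<Longrightarrow> qv TYPE('f) powi i * qv TYPE('f) powi j * qv TYPE('f) powi k = 1"
  by (simp add: powi_add)

lemma Qpow: "(of_nat (CARD('f) ^ m) :: complex) = qv TYPE('f) powi (2 * int m)"
  using q_pow2 by simp

lemma E2_card:
  assumes a: "sub a"
  shows "card {b. sub b \<and> (cov b a \<and> Y b = Y a) \<and> y = Y b \<and> z = Z b}
       = (if y = Y a \<and> sub z \<and> z \<subseteq> x0 \<and> cov z (Z a) then CARD('f) ^ (dd a - dd (Z a)) else 0)"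
proof (cases "y = Y a \<and> sub z \<and> z \<subseteq> x0 \<and> cov z (Z a)")
  case True
  have e: "{b. sub b \<and> (cov b a \<and> Y b = Y a) \<and> y = Y b \<and> z = Z b} = {b. sub b \<and> cov b a \<and> Y b = Y a \<and> Z b = z}"
    using True by auto
  have "card {g\<in>hyp z a. \<not> Z a \<subseteq> g} = CARD('f) ^ (dd a - dd (Z a))"
    by (rule hyp_not_count) (use True subZ[OF a] a in \<open>auto simp: cov_def\<close>)
  then show ?thesis unfolding e E2_set[OF a] using True by (simp add: E2_set[OF a])
next
  case False
  have e: "{b. sub b \<and> (cov b a \<and> Y b = Y a) \<and> y = Y b \<and> z = Z b} = {}"
  proof (rule ccontr)
    assume "{b. sub b \<and> (cov b a \<and> Y b = Y a) \<and> y = Y b \<and> z = Z b} \<noteq> {}"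
    then obtain b where b: "sub b" "cov b a" "Y b = Y a" "y = Y b" "z = Z b" by blast
    have "cov (Z b) (Z a)" using E2_nec[OF a b(1,2,3)] .
    then show False using False b subZ[OF b(1)] by auto
  qed
  show ?thesis unfolding e using False by simp
qed

lemma F1_card:
  assumes a: "sub a"
  shows "card {b. sub b \<and> (cov a b \<and> Z b = Z a) \<and> y = Y b \<and> z = Z b}
       = (if z = Z a \<and> sub y \<and> x0 \<subseteq> y \<and> cov (Y a) y then CARD('f) ^ (dd (Y a) - dd a) else 0)"
proof (cases "z = Z a \<and> sub y \<and> x0 \<subseteq> y \<and> cov (Y a) y")
  case True
  have e: "{b. sub b \<and> (cov a b \<and> Z b = Z a) \<and> y = Y b \<and> z = Z b} = {b. sub b \<and> cov a b \<and> Z b = Z a \<and> Y b = y}"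
    using True by auto
  have "card {w\<in>up1 a y. \<not> w \<subseteq> Y a} = CARD('f) ^ (dd (Y a) - dd a)"
    by (rule up1_not_count) (use True subY[OF a] a x_Y in \<open>auto simp: cov_def\<close>)
  then show ?thesis unfolding e using True by (simp add: F1_set[OF a])
next
  case False
  have e: "{b. sub b \<and> (cov a b \<and> Z b = Z a) \<and> y = Y b \<and> z = Z b} = {}"
  proof (rule ccontr)
    assume "{b. sub b \<and> (cov a b \<and> Z b = Z a) \<and> y = Y b \<and> z = Z b} \<noteq> {}"
    then obtain b where b: "sub b" "cov a b" "Z b = Z a" "y = Y b" "z = Z b" by blast
    have "cov (Y a) (Y b)" using F1_nec[OF a b(1,2,3)] .
    then show False using False b subY[OF b(1)] x0_Y[OF b(1)] by auto
  qed
  show ?thesis unfolding e using False by simp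
qed

lemma F2_card:
  assumes a: "sub a"
  shows "card {b. sub b \<and> (cov a b \<and> Y b = Y a) \<and> y = Y b \<and> z = Z b}
       = (if y = Y a \<and> sub z \<and> z \<subseteq> x0 \<and> cov (Z a) z then 1 else 0)"
proof (cases "y = Y a \<and> sub z \<and> z \<subseteq> x0 \<and> cov (Z a) z")
  case True
  have e: "{b. sub b \<and> (cov a b \<and> Y b = Y a) \<and> y = Y b \<and> z = Z b} = {b. sub b \<and> cov a b \<and> Y b = Y a \<and> Z b = z}"
    using True by auto
  show ?thesis unfolding e using True by (simp add: F2_set[OF a])
next
  case False
  have e: "{b. sub b \<and> (cov a b \<and> Y b = Y a) \<and> y = Y b \<and> z = Z b} = {}"
  proof (rule ccontr)
    assume "{b. sub b \<and> (cov a b \<and> Y b = Y a) \<and> y = Y b \<and> z = Z b} \<noteq> {}"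
    then obtain b where b: "sub b" "cov a b" "Y b = Y a" "y = Y b" "z = Z b" by blast
    have "cov (Z a) (Z b)" using F2_nec[OF a b(1,2,3)] .
    then show False using False b subZ[OF b(1)] by auto
  qed
  show ?thesis unfolding e using False by simp
qed

end


context S0
begin

lemma Umat_E_R:
  assumes a: "sub a"
  shows "Umat (qv TYPE('f)) (qv TYPE('f) ^ dd x0) {0} x0 UE (Z a) z = (if sub z \<and> z \<subseteq> x0 \<and> cov z (Z a) then 1 else 0)"
proof -
  have "qv TYPE('f) ^ dd x0 * qv TYPE('f) powi (- (int (dd x0))) = 1"
    using q_nz by (simp add: power_int_minus field_simps)
  then show ?thesis using Za_Lint[OF a] Lint0[of z] by (simp add: rdim_def)
qed

lemma Umat_F_R:
  assumes a: "sub a"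
  shows "Umat (qv TYPE('f)) (qv TYPE('f) ^ dd x0) {0} x0 UF (Z a) z
       = (if sub z \<and> z \<subseteq> x0 \<and> cov (Z a) z then qv TYPE('f) powi (1 - int (dd x0)) else 0)"
proof -
  have "qv TYPE('f) / qv TYPE('f) ^ dd x0 = qv TYPE('f) powi (1 - int (dd x0))"
    using q_nz by (simp add: power_int_diff)
  then show ?thesis using Za_Lint[OF a] Lint0[of z] by simp
qed

lemma Umat_E_L:
  assumes a: "sub a"
  shows "Umat (qv TYPE('f)) 1 x0 UNIV UE (Y a) y
       = (if sub y \<and> x0 \<subseteq> y \<and> cov y (Y a) then qv TYPE('f) powi (int (dd x0) - Dim TYPE('f) TYPE('n)) else 0)"
  using Ya_Lint[OF a] LintU[of y] by (simp add: rdim_def Dim_def)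

lemma Umat_F_L:
  assumes a: "sub a"
  shows "Umat (qv TYPE('f)) 1 x0 UNIV UF (Y a) y = (if sub y \<and> x0 \<subseteq> y \<and> cov (Y a) y then qv TYPE('f) else 0)"
  using Ya_Lint[OF a] LintU[of y] by simp

lemma dimZ_le: "sub a \<Longrightarrow> dd (Z a) \<le> dd a" by (rule dim_mono) blast

lemma dimZ_le0: "dd (Z a) \<le> dd x0" by (rule dim_mono) blast

lemma E2_col:
  assumes a: "a \<in> Lsub"
  shows "colsum (\<lambda>a b. qv TYPE('f) powi (int (dd x0) - Dim TYPE('f) TYPE('n)) *
            (L2 x0 a b * (if b \<in> Lsub then qv TYPE('f) powi e1 x0 b else 0))) a y z
       = (if y = Y a then 1 else 0) * Umat (qv TYPE('f)) (qv TYPE('f) ^ dd x0) {0} x0 UE (Z a) z"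
proof -
  let ?c = "qv TYPE('f) powi (int (dd x0) - Dim TYPE('f) TYPE('n))"
  let ?c' = "?c * qv TYPE('f) powi e1 x0 a"
  have sa: "sub a" using a sub_Lsub by blast
  have "colsum (\<lambda>a b. ?c * (L2 x0 a b * (if b \<in> Lsub then qv TYPE('f) powi e1 x0 b else 0))) a y z
      = ?c' * of_nat (card {b. sub b \<and> (cov b a \<and> Y b = Y a) \<and> y = Y b \<and> z = Z b})"
    by (rule colsum_card[OF a]) (use a in \<open>auto simp: L2_def e1_def\<close>)
  also have "\<dots> = (if y = Y a \<and> sub z \<and> z \<subseteq> x0 \<and> cov z (Z a) then ?c' * of_nat (CARD('f) ^ (dd a - dd (Z a))) else 0)"
    unfolding E2_card[OF sa] by simp
  also have "?c' * of_nat (CARD('f) ^ (dd a - dd (Z a))) = 1"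
    unfolding Qpow mult.assoc[symmetric]
    by (rule prod3) (use YZ[OF sa] dimZ_le[OF sa] in \<open>simp add: e1_def Dim_def of_nat_diff\<close>)
  finally show ?thesis unfolding Umat_E_R[OF sa] by simp
qed

lemma prod3': "i + j + k = 1 \<Longrightarrow> qv TYPE('f) powi i * qv TYPE('f) powi j * qv TYPE('f) powi k = qv TYPE('f)"
  by (simp add: powi_add)

lemma F1_col:
  assumes a: "a \<in> Lsub"
  shows "colsum (\<lambda>a b. qv TYPE('f) powi (1 - int (dd x0)) *
            ((if a \<in> Lsub then qv TYPE('f) powi (- e2 x0 a) else 0) * R1 x0 a b)) a y z
       = (if z = Z a then 1 else 0) * Umat (qv TYPE('f)) 1 x0 UNIV UF (Y a) y"
proof -
  let ?c' = "qv TYPE('f) powi (1 - int (dd x0)) * qv TYPE('f) powi (- e2 x0 a)"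
  have sa: "sub a" using a sub_Lsub by blast
  have "colsum (\<lambda>a b. qv TYPE('f) powi (1 - int (dd x0)) *
            ((if a \<in> Lsub then qv TYPE('f) powi (- e2 x0 a) else 0) * R1 x0 a b)) a y z
      = ?c' * of_nat (card {b. sub b \<and> (cov a b \<and> Z b = Z a) \<and> y = Y b \<and> z = Z b})"
    by (rule colsum_card[OF a]) (use a in \<open>auto simp: R1_def\<close>)
  also have "\<dots> = (if z = Z a \<and> sub y \<and> x0 \<subseteq> y \<and> cov (Y a) y then ?c' * of_nat (CARD('f) ^ (dd (Y a) - dd a)) else 0)"
    unfolding F1_card[OF sa] by simp
  also have "?c' * of_nat (CARD('f) ^ (dd (Y a) - dd a)) = qv TYPE('f)"
    unfolding Qpow mult.assoc[symmetric]
    by (rule prod3') (use YZ[OF sa] dimZ_le0[of a] in \<open>simp add: e2_def of_nat_diff\<close>)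
  finally show ?thesis unfolding Umat_F_L[OF sa] by simp
qed

lemma F2_col:
  assumes a: "a \<in> Lsub"
  shows "colsum (\<lambda>a b. qv TYPE('f) powi (1 - int (dd x0)) * R2 x0 a b) a y z
       = (if y = Y a then 1 else 0) * Umat (qv TYPE('f)) (qv TYPE('f) ^ dd x0) {0} x0 UF (Z a) z"
proof -
  have sa: "sub a" using a sub_Lsub by blast
  have "colsum (\<lambda>a b. qv TYPE('f) powi (1 - int (dd x0)) * R2 x0 a b) a y z
      = qv TYPE('f) powi (1 - int (dd x0)) * of_nat (card {b. sub b \<and> (cov a b \<and> Y b = Y a) \<and> y = Y b \<and> z = Z b})"
    by (rule colsum_card[OF a]) (use a in \<open>auto simp: R2_def\<close>)
  also have "\<dots> = (if y = Y a \<and> sub z \<and> z \<subseteq> x0 \<and> cov (Z a) z then qv TYPE('f) powi (1 - int (dd x0)) else 0)"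
    unfolding F2_card[OF sa] by simp
  finally show ?thesis unfolding Umat_F_R[OF sa] by simp
qed

lemma K1_col:
  assumes a: "a \<in> Lsub"
  shows "colsum (D1 (qv TYPE('f)) x0) a y z = (if z = Z a then 1 else 0) * Umat (qv TYPE('f)) 1 x0 UNIV UK (Y a) y"
proof -
  have sa: "sub a" using a sub_Lsub by blast
  show ?thesis unfolding D1_def colsum_diag[OF a] using Ya_Lint[OF sa] by (auto simp: e1_def rdim_def)
qed

lemma K1i_col:
  assumes a: "a \<in> Lsub"
  shows "colsum (D1i (qv TYPE('f)) x0) a y z = (if z = Z a then 1 else 0) * Umat (qv TYPE('f)) 1 x0 UNIV UKi (Y a) y"
proof -
  have sa: "sub a" using a sub_Lsub by blast
  show ?thesis unfolding D1i_def colsum_diag[OF a] using Ya_Lint[OF sa] by (auto simp: e1_def rdim_def)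
qed

lemma K2_col:
  assumes a: "a \<in> Lsub"
  shows "colsum (D2 (qv TYPE('f)) x0) a y z = (if y = Y a then 1 else 0) * Umat (qv TYPE('f)) (qv TYPE('f) ^ dd x0) {0} x0 UK (Z a) z"
proof -
  have sa: "sub a" using a sub_Lsub by blast
  show ?thesis unfolding D2_def colsum_diag[OF a] using Za_Lint[OF sa] by (auto simp: e2_def rdim_def)
qed

lemma K2i_col:
  assumes a: "a \<in> Lsub"
  shows "colsum (D2i (qv TYPE('f)) x0) a y z = (if y = Y a then 1 else 0) * Umat (qv TYPE('f)) (qv TYPE('f) ^ dd x0) {0} x0 UKi (Z a) z"
proof -
  have sa: "sub a" using a sub_Lsub by blast
  show ?thesis unfolding D2i_def colsum_diag[OF a] using Za_Lint[OF sa] by (auto simp: e2_def rdim_def)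
qed

end


context S0
begin

lemma colsum_factor:
  assumes "\<And>b. b \<in> Lsub \<Longrightarrow> M a b \<noteq> 0 \<Longrightarrow> g b = g0"
  shows "colsum (\<lambda>a b. M a b * g b) a y z = g0 * colsum M a y z"
  unfolding colsum_def sum_distrib_left
  by (rule sum.cong[OF refl]) (use assms in \<open>fastforce\<close>)

lemma colsum_add:
  "colsum (\<lambda>a b. c * A a b + B a b) a y z = c * colsum A a y z + colsum B a y z"
  unfolding colsum_def by (simp add: sum.distrib sum_distrib_left algebra_simps)

lemma D4_val:
  assumes a: "sub a"
  shows "(of_real ((real (card a) + real (card x0)) / real (card (Z a)) - 1) :: complex)
       = of_nat (CARD('f) ^ (dd a - dd (Z a))) + of_nat (CARD('f) ^ (dd (Y a) - dd a)) - 1"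
proof -
  let ?Q = "real CARD('f)"
  have c1: "real (card a) = ?Q ^ dd (Z a) * ?Q ^ (dd a - dd (Z a))"
    using card_subspace[OF a] dimZ_le[OF a] by (simp add: power_add[symmetric])
  have c2: "real (card x0) = ?Q ^ dd (Z a) * ?Q ^ (dd (Y a) - dd a)"
  proof -
    have "dd x0 = dd (Z a) + (dd (Y a) - dd a)" using YZ[OF a] dimZ_le[OF a] dim_mono[OF x_Y[of a]] by linarith
    then show ?thesis using card_subspace[OF s0] by (simp add: power_add[symmetric])
  qed
  have c3: "real (card (Z a)) = ?Q ^ dd (Z a)" using card_subspace[OF subZ[OF a]] by simp
  have nz: "?Q ^ dd (Z a) \<noteq> 0" using Q_ge2[where 'f='f] by simp
  have "(real (card a) + real (card x0)) / real (card (Z a)) - 1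
      = ?Q ^ (dd a - dd (Z a)) + ?Q ^ (dd (Y a) - dd a) - 1"
    unfolding c1 c2 c3 using nz by (simp add: field_simps)
  then show ?thesis by simp
qed

end

context S01
begin

definition Tm where "Tm = (\<lambda>a b. (qv TYPE('f) ^ 2 - 1) * D3 x0 x1 a b + D4 x0 a b)"

lemma Top_mop: "Top (qv TYPE('f)) x0 x1 = mop Tm"
proof (intro ext)
  fix v y
  have "mop Tm v y = (\<Sum>x\<in>UNIV. (qv TYPE('f) ^ 2 - 1) * (v x * D3 x0 x1 x y) + v x * D4 x0 x y)"
    unfolding mop_def Tm_def by (rule sum.cong[OF refl]) (simp add: algebra_simps)
  also have "\<dots> = (qv TYPE('f) ^ 2 - 1) * mop (D3 x0 x1) v y + mop (D4 x0) v y"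
    unfolding mop_def sum.distrib sum_distrib_left ..
  finally show "Top (qv TYPE('f)) x0 x1 v y = mop Tm v y" unfolding Top_def by simp
qed

lemma Tm_nz: "a \<in> Lsub \<Longrightarrow> Tm a b \<noteq> 0 \<Longrightarrow> b \<in> cls a"
  unfolding Tm_def D3_def D4_def diagm_def cls_def Lsub_def by (auto split: if_splits)

lemma colsum_D3:
  assumes a: "a \<in> Lsub"
  shows "colsum (D3 x0 x1) a y z = (if y = Y a \<and> z = Z a then of_nat (card {b\<in>cls a. dd (ssum a b) = dd a + 1}) else 0)"
proof -
  have sa: "sub a" using a sub_Lsub by blast
  have "colsum (D3 x0 x1) a y z
      = 1 * of_nat (card {b. sub b \<and> (Y b = Y a \<and> Z b = Z a \<and> rank_tau_diff x0 x1 a b = 1) \<and> y = Y b \<and> z = Z b})"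
    by (rule colsum_card[OF a]) (use a in \<open>auto simp: D3_def\<close>)
  also have "{b. sub b \<and> (Y b = Y a \<and> Z b = Z a \<and> rank_tau_diff x0 x1 a b = 1) \<and> y = Y b \<and> z = Z b}
      = (if y = Y a \<and> z = Z a then {b\<in>cls a. dd (ssum a b) = dd a + 1} else {})"
  proof (cases "y = Y a \<and> z = Z a")
    case True
    have "\<And>b. sub b \<Longrightarrow> Y b = Y a \<Longrightarrow> Z b = Z a \<Longrightarrow> (rank_tau_diff x0 x1 a b = 1) = (dd (ssum a b) = dd a + 1)"
    proof -
      fix b assume b: "sub b" "Y b = Y a" "Z b = Z a"
      have "dd a \<le> dd (ssum a b)" using dim_mono[OF ssum_ge1[OF b(1)]] .
      then show "(rank_tau_diff x0 x1 a b = 1) = (dd (ssum a b) = dd a + 1)"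
        unfolding rank_formula[OF sa b] by linarith
    qed
    then show ?thesis using True unfolding cls_def by auto
  next
    case False
    then show ?thesis by auto
  qed
  finally show ?thesis by simp
qed

lemma colsum_T:
  assumes a: "a \<in> Lsub"
  shows "colsum Tm a y z = (if y = Y a \<and> z = Z a then of_nat (CARD('f) ^ (dd (Y a) - dd (Z a))) else 0)"
proof -
  have sa: "sub a" using a sub_Lsub by blast
  let ?N = "card {b\<in>cls a. dd (ssum a b) = dd a + 1}"
  have "colsum Tm a y z = (qv TYPE('f) ^ 2 - 1) * colsum (D3 x0 x1) a y z + colsum (D4 x0) a y z"
    unfolding Tm_def by (rule colsum_add)
  also have "\<dots> = (if y = Y a \<and> z = Z a then (of_nat CARD('f) - 1) * of_nat ?N
        + (of_nat (CARD('f) ^ (dd a - dd (Z a))) + of_nat (CARD('f) ^ (dd (Y a) - dd a)) - 1) else 0)"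
    unfolding colsum_D3[OF a] D4_def colsum_diag[OF a] D4_val[OF sa] q_sq by simp
  also have "(of_nat CARD('f) - 1) * of_nat ?N
        + (of_nat (CARD('f) ^ (dd a - dd (Z a))) + of_nat (CARD('f) ^ (dd (Y a) - dd a)) - 1)
      = (of_nat (CARD('f) ^ (dd (Y a) - dd (Z a))) :: complex)"
  proof -
    have "int ?N * (int CARD('f) - 1) + (int CARD('f) ^ (dd a - dd (Z a)) + int CARD('f) ^ (dd (Y a) - dd a) - 1)
        = int CARD('f) ^ (dd (Y a) - dd (Z a))" using top_row[OF sa] .
    then have "(of_int (int ?N * (int CARD('f) - 1) + (int CARD('f) ^ (dd a - dd (Z a)) + int CARD('f) ^ (dd (Y a) - dd a) - 1)) :: complex)
        = of_int (int CARD('f) ^ (dd (Y a) - dd (Z a)))" by simp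
    then show ?thesis by (simp add: algebra_simps)
  qed
  finally show ?thesis by simp
qed

end


lemma sq_group_nonneg:
  fixes f :: "'a \<Rightarrow> real"
  assumes S: "finite S"
  shows "0 \<le> (\<Sum>a\<in>S. \<Sum>b\<in>S. if k a = k b then f a * f b else 0)"
proof -
  define G where "G c = (\<Sum>b\<in>{b\<in>S. k b = c}. f b)" for c
  have "(\<Sum>a\<in>S. \<Sum>b\<in>S. if k a = k b then f a * f b else 0) = (\<Sum>a\<in>S. f a * G (k a))"
  proof (rule sum.cong[OF refl])
    fix a
    have "(\<Sum>b\<in>S. if k a = k b then f a * f b else 0) = (\<Sum>b\<in>{b\<in>S. k b = k a}. f a * f b)"
      using S by (simp add: sum.inter_filter eq_commute)
    then show "(\<Sum>b\<in>S. if k a = k b then f a * f b else 0) = f a * G (k a)"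
      unfolding G_def by (simp add: sum_distrib_left)
  qed
  also have "\<dots> = (\<Sum>c\<in>k ` S. \<Sum>a\<in>{a\<in>S. k a = c}. f a * G (k a))"
    using sum.image_gen[OF S, of "\<lambda>a. f a * G (k a)" k] by simp
  also have "\<dots> = (\<Sum>c\<in>k ` S. G c * G c)"
  proof (rule sum.cong[OF refl])
    fix c
    have "(\<Sum>a\<in>{a\<in>S. k a = c}. f a * G (k a)) = (\<Sum>a\<in>{a\<in>S. k a = c}. f a * G c)" by simp
    then show "(\<Sum>a\<in>{a\<in>S. k a = c}. f a * G (k a)) = G c * G c"
      unfolding G_def[of c] by (simp add: sum_distrib_right)
  qed
  also have "\<dots> \<ge> 0" by (intro sum_nonneg) simp
  finally show ?thesis .
qed

context S0
begin

lemma D4_val_r: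
  assumes a: "sub a"
  shows "(real (card a) + real (card x0)) / real (card (Z a)) - 1
       = real CARD('f) ^ (dd a - dd (Z a)) + real CARD('f) ^ (dd (Y a) - dd a) - 1"
proof -
  let ?Q = "real CARD('f)"
  have c1: "real (card a) = ?Q ^ dd (Z a) * ?Q ^ (dd a - dd (Z a))"
    using card_subspace[OF a] dimZ_le[OF a] by (simp add: power_add[symmetric])
  have c2: "real (card x0) = ?Q ^ dd (Z a) * ?Q ^ (dd (Y a) - dd a)"
  proof -
    have "dd x0 = dd (Z a) + (dd (Y a) - dd a)" using YZ[OF a] dimZ_le[OF a] dim_mono[OF x_Y[of a]] by linarith
    then show ?thesis using card_subspace[OF s0] by (simp add: power_add[symmetric])
  qed
  have c3: "real (card (Z a)) = ?Q ^ dd (Z a)" using card_subspace[OF subZ[OF a]] by simp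
  have nz: "?Q ^ dd (Z a) \<noteq> 0" using Q_ge2[where 'f='f] by simp
  show ?thesis unfolding c1 c2 c3 using nz by (simp add: field_simps)
qed

end

context S01
begin

definition Tr where "Tr a b = (real CARD('f) - 1) * (if a \<in> Lsub \<and> b \<in> Lsub \<and> Y b = Y a \<and> Z b = Z a \<and> rank_tau_diff x0 x1 a b = 1 then 1 else 0)
   + (if a \<in> Lsub \<and> b = a then (real (card a) + real (card x0)) / real (card (Z a)) - 1 else 0)"

lemma Tm_Tr: "Tm a b = of_real (Tr a b)"
  unfolding Tm_def Tr_def D3_def D4_def diagm_def q_sq by simp

lemma up1_self:
  assumes a: "sub a"
  shows "real (card (up1 a (Y a))) * (real CARD('f) - 1) = real CARD('f) ^ (dd (Y a) - dd a) - 1"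
proof -
  let ?Q = "int CARD('f)"
  have u: "int (card (up1 a (Y a))) * (?Q - 1) * ?Q ^ dd a = ?Q ^ dd (Y a) - ?Q ^ dd a"
    using up1_count_int[OF a subY[OF a] x_Y] .
  have "?Q ^ dd (Y a) = ?Q ^ dd a * ?Q ^ (dd (Y a) - dd a)"
    using dim_mono[OF x_Y[of a]] by (simp add: power_add[symmetric])
  then have "(int (card (up1 a (Y a))) * (?Q - 1)) * ?Q ^ dd a = (?Q ^ (dd (Y a) - dd a) - 1) * ?Q ^ dd a"
    using u by (simp add: algebra_simps)
  moreover have "?Q ^ dd a \<noteq> 0" using Q_ge2[where 'f='f] by simp
  ultimately have "int (card (up1 a (Y a))) * (?Q - 1) = ?Q ^ (dd (Y a) - dd a) - 1" by simp
  then have "real_of_int (int (card (up1 a (Y a))) * (?Q - 1)) = real_of_int (?Q ^ (dd (Y a) - dd a) - 1)" by simp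
  then show ?thesis by simp
qed

definition U where "U a = up1 a (Y a)"

lemma Tr_dec:
  assumes a: "a \<in> Lsub" and b: "b \<in> Lsub"
  shows "Tr a b = (real CARD('f) - 1) * real (card {w. b \<in> cls a \<and> w \<in> U a \<and> w \<in> U b})
      + (if a = b then real CARD('f) ^ (dd a - dd (Z a)) else 0)"
proof -
  have sa: "sub a" and sb: "sub b" using a b sub_Lsub by auto
  show ?thesis
  proof (cases "b \<in> cls a")
    case False
    then have "a \<noteq> b" using self_cls[OF sa] by auto
    then show ?thesis using False sb unfolding Tr_def cls_def by auto
  next
    case True
    then have yz: "Y b = Y a" "Z b = Z a" unfolding cls_def by auto
    have Ub: "U b = {w. sub w \<and> b \<subseteq> w \<and> w \<subseteq> Y a \<and> dd w = dd a + 1}"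
      unfolding U_def up1_def using cls_dim[OF sa True] yz by simp
    show ?thesis
    proof (cases "a = b")
      case True
      have r0: "rank_tau_diff x0 x1 a a = 0" using rank_formula[OF sa sa refl refl] ssum_absorb[OF sa sa] by simp
      have "{w. a \<in> cls a \<and> w \<in> U a \<and> w \<in> U a} = U a" using self_cls[OF sa] by auto
      then have "(real CARD('f) - 1) * real (card {w. b \<in> cls a \<and> w \<in> U a \<and> w \<in> U b})
          = real CARD('f) ^ (dd (Y a) - dd a) - 1"
        using up1_self[OF sa] True unfolding U_def by (simp add: mult.commute)
      moreover have "(real (card a) + real (card x0)) / real (card (Z a)) - 1
          = real CARD('f) ^ (dd a - dd (Z a)) + real CARD('f) ^ (dd (Y a) - dd a) - 1"
        by (rule D4_val_r[OF sa])
      ultimately show ?thesis unfolding Tr_def using True a r0 by simp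
    next
      case False
      have eqr: "(rank_tau_diff x0 x1 a b = 1) = (dd (ssum a b) = dd a + 1)"
        using rank_formula[OF sa sb yz] dim_mono[OF ssum_ge1[OF sb]] by linarith
      have "card {w. b \<in> cls a \<and> w \<in> U a \<and> w \<in> U b} = (if dd (ssum a b) = dd a + 1 then 1 else 0)"
      proof (cases "dd (ssum a b) = dd a + 1")
        case True
        note r = rank1_w[OF sa \<open>b \<in> cls a\<close> True]
        have "{w. b \<in> cls a \<and> w \<in> U a \<and> w \<in> U b} = {ssum a b}"
        proof (intro set_eqI iffI)
          fix w assume "w \<in> {w. b \<in> cls a \<and> w \<in> U a \<and> w \<in> U b}"
          then have "w \<in> up1 a (Y a)" "b \<subseteq> w" unfolding U_def[of a] Ub by auto
          then show "w \<in> {ssum a b}" using up1_w[OF sa \<open>b \<in> cls a\<close> r(2)] by auto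
        next
          fix w assume "w \<in> {ssum a b}"
          then show "w \<in> {w. b \<in> cls a \<and> w \<in> U a \<and> w \<in> U b}"
            using r \<open>b \<in> cls a\<close> unfolding U_def[of a] Ub up1_def by auto
        qed
        then show ?thesis using True by simp
      next
        case False
        have "{w. b \<in> cls a \<and> w \<in> U a \<and> w \<in> U b} = {}"
        proof (rule ccontr)
          assume "{w. b \<in> cls a \<and> w \<in> U a \<and> w \<in> U b} \<noteq> {}"
          then obtain w where "w \<in> up1 a (Y a)" "b \<subseteq> w" unfolding U_def[of a] Ub by auto
          then have "w = ssum a b" "w \<in> up1 a (Y a)" using up1_w[OF sa \<open>b \<in> cls a\<close>] \<open>a \<noteq> b\<close> by auto
          then show False using False unfolding up1_def by auto
        qed
        then show ?thesis using False by simp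
      qed
      then show ?thesis unfolding Tr_def using False a b yz eqr by simp
    qed
  qed
qed

end


context S01
begin

definition gw where "gw u w x = (if w \<in> U x then u x else (0::real))"

lemma term_dec:
  assumes a: "a \<in> Lsub" and b: "b \<in> Lsub"
  shows "u b * (u a * Tr a b) = (real CARD('f) - 1) * (\<Sum>w\<in>UNIV. if (Y b, Z b) = (Y a, Z a) then gw u w b * gw u w a else 0)
      + (if a = b then real CARD('f) ^ (dd a - dd (Z a)) * (u a)\<^sup>2 else 0)"
proof -
  have sb: "sub b" using b sub_Lsub by auto
  have cl: "(b \<in> cls a) = ((Y b, Z b) = (Y a, Z a))" unfolding cls_def using sb by auto
  have "real (card {w. b \<in> cls a \<and> w \<in> U a \<and> w \<in> U b}) = (\<Sum>w\<in>UNIV. if b \<in> cls a \<and> w \<in> U a \<and> w \<in> U b then 1 else 0)"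
    by (simp add: sum.inter_filter[symmetric])
  then have "u b * u a * real (card {w. b \<in> cls a \<and> w \<in> U a \<and> w \<in> U b})
      = (\<Sum>w\<in>UNIV. u b * u a * (if b \<in> cls a \<and> w \<in> U a \<and> w \<in> U b then 1 else 0))"
    by (simp add: sum_distrib_left)
  also have "\<dots> = (\<Sum>w\<in>UNIV. if (Y b, Z b) = (Y a, Z a) then gw u w b * gw u w a else 0)"
    by (rule sum.cong) (auto simp: cl gw_def)
  finally have "u b * u a * real (card {w. b \<in> cls a \<and> w \<in> U a \<and> w \<in> U b})
      = (\<Sum>w\<in>UNIV. if (Y b, Z b) = (Y a, Z a) then gw u w b * gw u w a else 0)" .
  then have X: "u b * u a * real (card {w. b \<in> cls a \<and> w \<in> U a \<and> w \<in> U b})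
      = (\<Sum>w\<in>UNIV. if (Y b, Z b) = (Y a, Z a) then gw u w b * gw u w a else 0)" .
  have D: "u b * u a * (if a = b then real CARD('f) ^ (dd a - dd (Z a)) else 0)
      = (if a = b then real CARD('f) ^ (dd a - dd (Z a)) * (u a)\<^sup>2 else 0)"
    by (simp add: power2_eq_square)
  have "u b * (u a * Tr a b) = (real CARD('f) - 1) * (u b * u a * real (card {w. b \<in> cls a \<and> w \<in> U a \<and> w \<in> U b}))
      + u b * u a * (if a = b then real CARD('f) ^ (dd a - dd (Z a)) else 0)"
    unfolding Tr_dec[OF a b] by (simp only: algebra_simps)
  also have "\<dots> = (real CARD('f) - 1) * (\<Sum>w\<in>UNIV. if (Y b, Z b) = (Y a, Z a) then gw u w b * gw u w a else 0)
      + (if a = b then real CARD('f) ^ (dd a - dd (Z a)) * (u a)\<^sup>2 else 0)"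
    unfolding X D ..
  finally show ?thesis .
qed

lemma quad_ge:
  fixes u :: "('f^'n) set \<Rightarrow> real"
  shows "(\<Sum>a\<in>Lsub. (u a)\<^sup>2) \<le> (\<Sum>b\<in>Lsub. u b * (\<Sum>a\<in>Lsub. u a * Tr a b))"
proof -
  let ?c = "real CARD('f) - 1"
  let ?k = "\<lambda>x::('f^'n) set. (Y x, Z x)"
  have "(\<Sum>b\<in>Lsub. u b * (\<Sum>a\<in>Lsub. u a * Tr a b)) = (\<Sum>b\<in>Lsub. \<Sum>a\<in>Lsub. u b * (u a * Tr a b))"
    by (simp add: sum_distrib_left)
  also have "\<dots> = (\<Sum>b\<in>Lsub. \<Sum>a\<in>Lsub. ?c * (\<Sum>w\<in>UNIV. if ?k b = ?k a then gw u w b * gw u w a else 0)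
      + (if a = b then real CARD('f) ^ (dd a - dd (Z a)) * (u a)\<^sup>2 else 0))"
    by (intro sum.cong refl term_dec)
  also have "\<dots> = ?c * (\<Sum>w\<in>UNIV. \<Sum>b\<in>Lsub. \<Sum>a\<in>Lsub. if ?k b = ?k a then gw u w b * gw u w a else 0)
      + (\<Sum>b\<in>Lsub. real CARD('f) ^ (dd b - dd (Z b)) * (u b)\<^sup>2)"
  proof -
    have e1: "(\<Sum>b\<in>Lsub. \<Sum>a\<in>Lsub. ?c * (\<Sum>w\<in>UNIV. if ?k b = ?k a then gw u w b * gw u w a else 0))
        = ?c * (\<Sum>w\<in>UNIV. \<Sum>b\<in>Lsub. \<Sum>a\<in>Lsub. if ?k b = ?k a then gw u w b * gw u w a else 0)"
    proof -
      have "(\<Sum>b\<in>Lsub. \<Sum>a\<in>Lsub. ?c * (\<Sum>w\<in>UNIV. if ?k b = ?k a then gw u w b * gw u w a else 0))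
          = ?c * (\<Sum>b\<in>Lsub. \<Sum>a\<in>Lsub. \<Sum>w\<in>UNIV. if ?k b = ?k a then gw u w b * gw u w a else 0)"
        by (simp add: sum_distrib_left)
      also have "(\<Sum>b\<in>Lsub. \<Sum>a\<in>Lsub. \<Sum>w\<in>UNIV. if ?k b = ?k a then gw u w b * gw u w a else 0)
          = (\<Sum>b\<in>Lsub. \<Sum>w\<in>UNIV. \<Sum>a\<in>Lsub. if ?k b = ?k a then gw u w b * gw u w a else 0)"
        by (intro sum.cong refl sum.swap)
      also have "\<dots> = (\<Sum>w\<in>UNIV. \<Sum>b\<in>Lsub. \<Sum>a\<in>Lsub. if ?k b = ?k a then gw u w b * gw u w a else 0)"
        by (rule sum.swap)
      finally show ?thesis .
    qed
    have e2: "(\<Sum>b\<in>Lsub. \<Sum>a\<in>Lsub. if a = b then real CARD('f) ^ (dd a - dd (Z a)) * (u a)\<^sup>2 else 0)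
        = (\<Sum>b\<in>Lsub. real CARD('f) ^ (dd b - dd (Z b)) * (u b)\<^sup>2)"
    proof (rule sum.cong[OF refl])
      fix b :: "('f^'n) set" assume "b \<in> Lsub"
      have "(\<Sum>a\<in>Lsub. if a = b then real CARD('f) ^ (dd a - dd (Z a)) * (u a)\<^sup>2 else 0)
          = (\<Sum>a\<in>Lsub. if a = b then real CARD('f) ^ (dd b - dd (Z b)) * (u b)\<^sup>2 else 0)"
        by (rule sum.cong) auto
      also have "\<dots> = real CARD('f) ^ (dd b - dd (Z b)) * (u b)\<^sup>2"
        using \<open>b \<in> Lsub\<close> by (subst sum.delta) simp_all
      finally show "(\<Sum>a\<in>Lsub. if a = b then real CARD('f) ^ (dd a - dd (Z a)) * (u a)\<^sup>2 else 0)
          = real CARD('f) ^ (dd b - dd (Z b)) * (u b)\<^sup>2" .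
    qed
    show ?thesis unfolding sum.distrib e1 e2 ..
  qed
  finally have eq: "(\<Sum>b\<in>Lsub. u b * (\<Sum>a\<in>Lsub. u a * Tr a b)) = ?c * (\<Sum>w\<in>UNIV. \<Sum>b\<in>Lsub. \<Sum>a\<in>Lsub. if ?k b = ?k a then gw u w b * gw u w a else 0)
      + (\<Sum>b\<in>Lsub. real CARD('f) ^ (dd b - dd (Z b)) * (u b)\<^sup>2)" .
  have nn: "0 \<le> ?c * (\<Sum>w\<in>UNIV. \<Sum>b\<in>Lsub. \<Sum>a\<in>Lsub. if ?k b = ?k a then gw u w b * gw u w a else 0)"
  proof (rule mult_nonneg_nonneg)
    show "0 \<le> ?c" using Q_ge2[where 'f='f] by simp
    show "0 \<le> (\<Sum>w\<in>UNIV. \<Sum>b\<in>Lsub. \<Sum>a\<in>Lsub. if ?k b = ?k a then gw u w b * gw u w a else 0)"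
      by (intro sum_nonneg sq_group_nonneg) simp
  qed
  have "(\<Sum>a\<in>Lsub. (u a)\<^sup>2) \<le> (\<Sum>b\<in>Lsub. real CARD('f) ^ (dd b - dd (Z b)) * (u b)\<^sup>2)"
  proof (rule sum_mono)
    fix b
    have "1 \<le> real CARD('f) ^ (dd b - dd (Z b))" using Q_ge2[where 'f='f] by simp
    then show "(u b)\<^sup>2 \<le> real CARD('f) ^ (dd b - dd (Z b)) * (u b)\<^sup>2"
      using mult_right_mono[of 1 "real CARD('f) ^ (dd b - dd (Z b))" "(u b)\<^sup>2"] by simp
  qed
  then show ?thesis unfolding eq using nn by linarith
qed

end


context S01
begin

lemma Tm_zero_col: "b \<notin> Lsub \<Longrightarrow> Tm a b = 0"
  unfolding Tm_def D3_def D4_def diagm_def by auto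

lemma mop_Tm_Lsub:
  assumes v: "v \<in> Vspace"
  shows "mop Tm v b = (\<Sum>a\<in>Lsub. v a * of_real (Tr a b))"
proof -
  have "mop Tm v b = (\<Sum>a\<in>UNIV. v a * of_real (Tr a b))" unfolding mop_def Tm_Tr ..
  also have "\<dots> = (\<Sum>a\<in>Lsub. v a * of_real (Tr a b))"
    by (rule sum.mono_neutral_right) (use v in \<open>auto simp: Vspace_def\<close>)
  finally show ?thesis .
qed

lemma real_inj:
  fixes u :: "('f^'n) set \<Rightarrow> real"
  assumes h: "\<And>b. b \<in> Lsub \<Longrightarrow> (\<Sum>a\<in>Lsub. u a * Tr a b) = 0"
  shows "\<And>a. a \<in> Lsub \<Longrightarrow> u a = 0"
proof -
  have "(\<Sum>a\<in>Lsub. (u a)\<^sup>2) \<le> 0" using quad_ge[of u] h by simp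
  moreover have "0 \<le> (\<Sum>a\<in>Lsub. (u a)\<^sup>2)" by (intro sum_nonneg) simp
  ultimately have "(\<Sum>a\<in>Lsub. (u a)\<^sup>2) = 0" by linarith
  then have "\<forall>a\<in>Lsub. (u a)\<^sup>2 = 0" by (subst (asm) sum_nonneg_eq_0_iff) auto
  then show "\<And>a. a \<in> Lsub \<Longrightarrow> u a = 0" by simp
qed

lemma Tm_inj:
  assumes v: "v \<in> Vspace" and z: "mop Tm v = (\<lambda>_. 0)"
  shows "v = (\<lambda>_. 0)"
proof -
  have re: "\<And>b. b \<in> Lsub \<Longrightarrow> (\<Sum>a\<in>Lsub. Re (v a) * Tr a b) = 0"
  proof -
    fix b :: "('f^'n) set" assume "b \<in> Lsub"
    have "Re (mop Tm v b) = 0" using z by simp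
    then show "(\<Sum>a\<in>Lsub. Re (v a) * Tr a b) = 0" unfolding mop_Tm_Lsub[OF v] by (simp add: Re_sum)
  qed
  have im: "\<And>b. b \<in> Lsub \<Longrightarrow> (\<Sum>a\<in>Lsub. Im (v a) * Tr a b) = 0"
  proof -
    fix b :: "('f^'n) set" assume "b \<in> Lsub"
    have "Im (mop Tm v b) = 0" using z by simp
    then show "(\<Sum>a\<in>Lsub. Im (v a) * Tr a b) = 0" unfolding mop_Tm_Lsub[OF v] by (simp add: Im_sum)
  qed
  show ?thesis
  proof
    fix a
    show "v a = 0"
    proof (cases "a \<in> Lsub")
      case True
      have "Re (v a) = 0" using real_inj[of "\<lambda>a. Re (v a)", OF re True] .
      moreover have "Im (v a) = 0" using real_inj[of "\<lambda>a. Im (v a)", OF im True] .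
      ultimately show ?thesis by (simp add: complex_eq_iff)
    next
      case False
      then show ?thesis using v unfolding Vspace_def by auto
    qed
  qed
qed

definition Fm :: "complex^(('f^'n) set) \<Rightarrow> complex^(('f^'n) set)" where
  "Fm x = (\<chi> y. if y \<in> Lsub then mop Tm (vec_nth x) y else x $ y)"

lemma Fm_linear: "linear Fm"
proof (rule linearI)
  fix x y :: "complex^(('f^'n) set)"
  show "Fm (x + y) = Fm x + Fm y"
    unfolding Fm_def mop_def by (simp add: vec_eq_iff sum.distrib distrib_right)
next
  fix r :: real and x :: "complex^(('f^'n) set)"
  show "Fm (r *\<^sub>R x) = r *\<^sub>R Fm x"
    unfolding Fm_def mop_def by (simp add: vec_eq_iff scaleR_sum_right mult_scaleR_left)
qed

lemma Fm_inj: "inj Fm"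
proof -
  have "\<forall>x. Fm x = 0 \<longrightarrow> x = 0"
  proof (intro allI impI)
    fix x assume h: "Fm x = 0"
    have vs: "vec_nth x \<in> Vspace"
    proof -
      have "\<And>y. y \<notin> Lsub \<Longrightarrow> x $ y = 0"
      proof -
        fix y :: "('f^'n) set" assume "y \<notin> Lsub"
        then have "Fm x $ y = x $ y" unfolding Fm_def by simp
        then show "x $ y = 0" using h by simp
      qed
      then show ?thesis unfolding Vspace_def by simp
    qed
    have "mop Tm (vec_nth x) = (\<lambda>_. 0)"
    proof
      fix y
      show "mop Tm (vec_nth x) y = 0"
      proof (cases "y \<in> Lsub")
        case True
        then have "Fm x $ y = mop Tm (vec_nth x) y" unfolding Fm_def by simp
        then show ?thesis using h by simp
      next
        case False
        then show ?thesis unfolding mop_def using Tm_zero_col by simp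
      qed
    qed
    then have "vec_nth x = (\<lambda>_. 0)" by (rule Tm_inj[OF vs])
    then show "x = 0" by (simp add: vec_eq_iff)
  qed
  then show ?thesis using linear_injective_0[OF Fm_linear] by blast
qed

lemma Fm_surj: "surj Fm"
  by (rule linear_injective_imp_surjective[OF Fm_linear Fm_inj]) simp

lemma Top_onto:
  assumes w: "w \<in> Vspace"
  shows "\<exists>u\<in>Vspace. Top (qv TYPE('f)) x0 x1 u = w"
proof -
  have "vec_lambda w \<in> range Fm" using Fm_surj by simp
  then obtain x where x: "Fm x = vec_lambda w" by (rule rangeE) simp
  have xw: "\<And>y. (if y \<in> Lsub then mop Tm (vec_nth x) y else x $ y) = w y"
  proof -
    fix y
    have "Fm x $ y = w y" using x by simp
    then show "(if y \<in> Lsub then mop Tm (vec_nth x) y else x $ y) = w y" unfolding Fm_def by simp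
  qed
  have vs: "vec_nth x \<in> Vspace"
  proof -
    have "\<And>y. y \<notin> Lsub \<Longrightarrow> x $ y = 0"
    proof -
      fix y :: "('f^'n) set" assume y: "y \<notin> Lsub"
      have "x $ y = w y" using xw[of y] y by simp
      then show "x $ y = 0" using w y unfolding Vspace_def by simp
    qed
    then show ?thesis unfolding Vspace_def by simp
  qed
  have "mop Tm (vec_nth x) = w"
  proof
    fix y
    show "mop Tm (vec_nth x) y = w y"
    proof (cases "y \<in> Lsub")
      case True
      then show ?thesis using xw[of y] by simp
    next
      case False
      then have "w y = 0" using w unfolding Vspace_def by simp
      then show ?thesis unfolding mop_def using Tm_zero_col False by simp
    qed
  qed
  then show ?thesis using vs unfolding Top_mop by blast
qed

lemma Top_inv:
  assumes w: "w \<in> Vspace"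
  shows "inv_into Vspace (Top (qv TYPE('f)) x0 x1) w \<in> Vspace"
    "Top (qv TYPE('f)) x0 x1 (inv_into Vspace (Top (qv TYPE('f)) x0 x1) w) = w"
proof -
  have "w \<in> Top (qv TYPE('f)) x0 x1 ` Vspace" using Top_onto[OF w] by blast
  then show "inv_into Vspace (Top (qv TYPE('f)) x0 x1) w \<in> Vspace"
    "Top (qv TYPE('f)) x0 x1 (inv_into Vspace (Top (qv TYPE('f)) x0 x1) w) = w"
    by (rule inv_into_into, rule f_inv_into_f)
qed

end


lemma iota_add: "iota x0 (\<lambda>y. f y + g y) = (\<lambda>p. iota x0 f p + iota x0 g p)"
  unfolding iota_def by (auto simp: sum.distrib distrib_right)

lemma iota_scal: "iota x0 (\<lambda>y. c * f y) = (\<lambda>p. c * iota x0 f p)"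
  unfolding iota_def by (auto simp: sum_distrib_left mult.assoc)

lemma mop_comp_diag_right:
  fixes d :: "('f::{field,finite}^'n) set \<Rightarrow> complex"
  shows "mop (diagm d) \<circ> mop B = mop (\<lambda>a c. B a c * (if c \<in> Lsub then d c else 0))"
  by (rule ext) (simp only: comp_def mop_comp diag_right)

lemma mop_comp_diag_left:
  fixes d :: "('f::{field,finite}^'n) set \<Rightarrow> complex"
  shows "mop A \<circ> mop (diagm d) = mop (\<lambda>a c. (if a \<in> Lsub then d a else 0) * A a c)"
  by (rule ext) (simp only: comp_def mop_comp diag_left)

context S01
begin

abbreviation "WW \<equiv> Wop (qv TYPE('f)) x0 x1"
abbreviation "TT \<equiv> tens_act (Umat (qv TYPE('f)) 1 x0 UNIV) (Umat (qv TYPE('f)) (qv TYPE('f) ^ dd x0) {0} x0)"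

lemma gen_E1: "v \<in> Vspace \<Longrightarrow> WW WE1 v \<in> Vspace \<and> iota x0 (WW WE1 v) = act TT (flat_gen WE1) (iota x0 v)"
  unfolding Wop.simps flat_gen.simps act.simps scop_mop
  by (intro conjI Vspace_mop gen_TL E1_col) (auto simp: L1_def)

lemma gen_E2: "v \<in> Vspace \<Longrightarrow> WW WE2 v \<in> Vspace \<and> iota x0 (WW WE2 v) = act TT (flat_gen WE2) (iota x0 v)"
  unfolding Wop.simps flat_gen.simps act.simps D1_def mop_comp_diag_right scop_mop
  by (intro conjI Vspace_mop gen_TR E2_col) (auto simp: L2_def)

lemma gen_F1: "v \<in> Vspace \<Longrightarrow> WW WF1 v \<in> Vspace \<and> iota x0 (WW WF1 v) = act TT (flat_gen WF1) (iota x0 v)"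
  unfolding Wop.simps flat_gen.simps act.simps D2i_def mop_comp_diag_left scop_mop
  by (intro conjI Vspace_mop gen_TL F1_col) (auto simp: R1_def)

lemma gen_F2: "v \<in> Vspace \<Longrightarrow> WW WF2 v \<in> Vspace \<and> iota x0 (WW WF2 v) = act TT (flat_gen WF2) (iota x0 v)"
  unfolding Wop.simps flat_gen.simps act.simps scop_mop
  by (intro conjI Vspace_mop gen_TR F2_col) (auto simp: R2_def)

lemma gen_K1: "v \<in> Vspace \<Longrightarrow> WW WK1 v \<in> Vspace \<and> iota x0 (WW WK1 v) = act TT (flat_gen WK1) (iota x0 v)"
  unfolding Wop.simps flat_gen.simps act.simps
  by (intro conjI Vspace_mop gen_TL K1_col) (auto simp: D1_def diagm_def)

lemma gen_K1i: "v \<in> Vspace \<Longrightarrow> WW WK1i v \<in> Vspace \<and> iota x0 (WW WK1i v) = act TT (flat_gen WK1i) (iota x0 v)"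
  unfolding Wop.simps flat_gen.simps act.simps
  by (intro conjI Vspace_mop gen_TL K1i_col) (auto simp: D1i_def diagm_def)

lemma gen_K2: "v \<in> Vspace \<Longrightarrow> WW WK2 v \<in> Vspace \<and> iota x0 (WW WK2 v) = act TT (flat_gen WK2) (iota x0 v)"
  unfolding Wop.simps flat_gen.simps act.simps
  by (intro conjI Vspace_mop gen_TR K2_col) (auto simp: D2_def diagm_def)

lemma gen_K2i: "v \<in> Vspace \<Longrightarrow> WW WK2i v \<in> Vspace \<and> iota x0 (WW WK2i v) = act TT (flat_gen WK2i) (iota x0 v)"
  unfolding Wop.simps flat_gen.simps act.simps
  by (intro conjI Vspace_mop gen_TR K2i_col) (auto simp: D2i_def diagm_def)

end


context S01
begin

definition GI where "GI b = qv TYPE('f) powi (- Dim TYPE('f) TYPE('n)) *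
   ((if b \<in> Lsub then qv TYPE('f) powi (- e2 x0 b) else 0) * (if b \<in> Lsub then qv TYPE('f) powi e1 x0 b else 0))"

lemma WI_mop: "WW WI = mop (\<lambda>a b. Tm a b * GI b)"
proof -
  have "WW WI = scop (qv TYPE('f) powi (- Dim TYPE('f) TYPE('n)))
      (mop (D1 (qv TYPE('f)) x0) \<circ> (mop (D2i (qv TYPE('f)) x0) \<circ> mop Tm))"
    unfolding Wop.simps Top_mop by (simp add: o_assoc)
  also have "\<dots> = mop (\<lambda>a b. Tm a b * GI b)"
    unfolding D1_def D2i_def mop_comp_diag_right scop_mop GI_def
    by (rule arg_cong[where f=mop]) (auto simp: fun_eq_iff algebra_simps)
  finally show ?thesis .
qed

lemma WI_col:
  assumes a: "a \<in> Lsub"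
  shows "colsum (\<lambda>a b. Tm a b * GI b) a y z = (if y = Y a \<and> z = Z a then 1 else 0)"
proof -
  have sa: "sub a" using a sub_Lsub by blast
  have "colsum (\<lambda>a b. Tm a b * GI b) a y z = GI a * colsum Tm a y z"
  proof (rule colsum_factor)
    fix b assume "b \<in> Lsub" "Tm a b \<noteq> 0"
    then have "b \<in> cls a" using Tm_nz[OF a] by blast
    then show "GI b = GI a" unfolding GI_def cls_def e1_def e2_def sub_Lsub using sa by auto
  qed
  also have "\<dots> = (if y = Y a \<and> z = Z a then GI a * of_nat (CARD('f) ^ (dd (Y a) - dd (Z a))) else 0)"
    unfolding colsum_T[OF a] by simp
  also have "GI a * of_nat (CARD('f) ^ (dd (Y a) - dd (Z a))) = 1"
  proof -
    have "GI a * of_nat (CARD('f) ^ (dd (Y a) - dd (Z a)))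
        = qv TYPE('f) powi (- Dim TYPE('f) TYPE('n)) * qv TYPE('f) powi (- e2 x0 a + e1 x0 a)
          * qv TYPE('f) powi (2 * int (dd (Y a) - dd (Z a)))"
      unfolding GI_def Qpow using a by (simp add: powi_add mult.assoc)
    also have "\<dots> = 1"
      by (rule prod3) (use YZ[OF sa] dimZ_le[OF sa] dim_mono[OF x_Y[of a]] in \<open>simp add: e1_def e2_def Dim_def of_nat_diff\<close>)
    finally show ?thesis .
  qed
  finally show ?thesis .
qed

lemma gen_I: "v \<in> Vspace \<Longrightarrow> WW WI v \<in> Vspace \<and> iota x0 (WW WI v) = act TT (flat_gen WI) (iota x0 v)"
proof
  assume v: "v \<in> Vspace"
  show "WW WI v \<in> Vspace" unfolding WI_mop by (rule Vspace_mop) (simp add: Tm_zero_col)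
  show "iota x0 (WW WI v) = act TT (flat_gen WI) (iota x0 v)"
  proof
    fix p :: "('f^'n) set \<times> ('f^'n) set"
    obtain y z where p: "p = (y, z)" by fastforce
    have "iota x0 (WW WI v) p = (\<Sum>a\<in>Lsub. v a * (if y = Y a \<and> z = Z a then 1 else 0))"
      unfolding p WI_mop iota_mop[OF v] by (rule sum.cong[OF refl]) (simp add: WI_col)
    also have "\<dots> = iota x0 v p" unfolding p iota_def by simp
    finally show "iota x0 (WW WI v) p = act TT (flat_gen WI) (iota x0 v) p" by simp
  qed
qed

end


context S01
begin

definition GIi where "GIi x = qv TYPE('f) powi (Dim TYPE('f) TYPE('n)) * (qv TYPE('f) powi e2 x0 x * qv TYPE('f) powi (- e1 x0 x))"

lemma WIi_eq: "WW WIi v = mop (diagm GIi) (inv_into Vspace (Top (qv TYPE('f)) x0 x1) v)"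
proof -
  have "WW WIi v = scop (qv TYPE('f) powi (Dim TYPE('f) TYPE('n)))
      (mop (D1i (qv TYPE('f)) x0) \<circ> mop (D2 (qv TYPE('f)) x0)) (inv_into Vspace (Top (qv TYPE('f)) x0 x1) v)"
    unfolding Wop.simps scop_def by simp
  also have "scop (qv TYPE('f) powi (Dim TYPE('f) TYPE('n))) (mop (D1i (qv TYPE('f)) x0) \<circ> mop (D2 (qv TYPE('f)) x0))
      = mop (diagm GIi)"
    unfolding D1i_def D2_def mop_comp_diag_right scop_mop GIi_def
    by (rule arg_cong[where f=mop]) (auto simp: fun_eq_iff diagm_def)
  finally show ?thesis .
qed

lemma gen_Ii: "v \<in> Vspace \<Longrightarrow> WW WIi v \<in> Vspace \<and> iota x0 (WW WIi v) = act TT (flat_gen WIi) (iota x0 v)"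
proof
  assume v: "v \<in> Vspace"
  let ?u = "inv_into Vspace (Top (qv TYPE('f)) x0 x1) v"
  have u: "?u \<in> Vspace" "mop Tm ?u = v" using Top_inv[OF v] unfolding Top_mop by auto
  show "WW WIi v \<in> Vspace" unfolding WIi_eq by (rule Vspace_mop) (auto simp: diagm_def)
  show "iota x0 (WW WIi v) = act TT (flat_gen WIi) (iota x0 v)"
  proof
    fix p :: "('f^'n) set \<times> ('f^'n) set"
    obtain y z where p: "p = (y, z)" by fastforce
    have "iota x0 (WW WIi v) p = (\<Sum>a\<in>Lsub. ?u a * (GIi a * (if y = Y a \<and> z = Z a then 1 else 0)))"
      unfolding p WIi_eq iota_mop[OF u(1)] by (rule sum.cong[OF refl]) (simp add: colsum_diag)
    also have "\<dots> = (\<Sum>a\<in>Lsub. ?u a * colsum Tm a y z)"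
    proof (rule sum.cong[OF refl])
      fix a :: "('f^'n) set" assume a: "a \<in> Lsub"
      have sa: "sub a" using a sub_Lsub by blast
      have "GIi a = of_nat (CARD('f) ^ (dd (Y a) - dd (Z a)))"
      proof -
        have "GIi a = qv TYPE('f) powi (Dim TYPE('f) TYPE('n)) * qv TYPE('f) powi e2 x0 a * qv TYPE('f) powi (- e1 x0 a)"
          unfolding GIi_def by (simp add: mult.assoc)
        also have "\<dots> = qv TYPE('f) powi (Dim TYPE('f) TYPE('n) + e2 x0 a + - e1 x0 a)" by (simp add: powi_add)
        also have "Dim TYPE('f) TYPE('n) + e2 x0 a + - e1 x0 a = 2 * int (dd (Y a) - dd (Z a))"
          using YZ[OF sa] dimZ_le[OF sa] dim_mono[OF x_Y[of a]] by (simp add: e1_def e2_def Dim_def of_nat_diff)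
        finally show ?thesis unfolding Qpow .
      qed
      then show "?u a * (GIi a * (if y = Y a \<and> z = Z a then 1 else 0)) = ?u a * colsum Tm a y z"
        unfolding colsum_T[OF a] by simp
    qed
    also have "\<dots> = iota x0 (mop Tm ?u) p" unfolding p iota_mop[OF u(1)] ..
    also have "\<dots> = iota x0 v p" using u(2) by simp
    finally show "iota x0 (WW WIi v) p = act TT (flat_gen WIi) (iota x0 v) p" by simp
  qed
qed

lemma gen_all: "v \<in> Vspace \<Longrightarrow> WW g v \<in> Vspace \<and> iota x0 (WW g v) = act TT (flat_gen g) (iota x0 v)"
  by (cases g) (simp_all only: gen_E1 gen_E2 gen_F1 gen_F2 gen_K1 gen_K1i gen_K2 gen_K2i gen_I gen_Ii)

lemma main_ind: "\<forall>v\<in>Vspace. act WW X v \<in> Vspace \<and> iota x0 (act WW X v) = act TT (flat X) (iota x0 v)"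
proof (induction X)
  case (Gen g)
  then show ?case unfolding flat_def using gen_all by simp
next
  case (Scal c)
  show ?case unfolding flat_def by (simp add: Vspace_def iota_scal)
next
  case (Plus a b)
  show ?case
  proof
    fix v :: "('f^'n) set \<Rightarrow> complex" assume v: "v \<in> Vspace"
    have "act WW a v \<in> Vspace" "act WW b v \<in> Vspace" using Plus v by auto
    then have "act WW (Plus a b) v \<in> Vspace" unfolding Vspace_def by simp
    moreover have "iota x0 (act WW (Plus a b) v) = act TT (flat (Plus a b)) (iota x0 v)"
      using Plus v unfolding flat_def by (simp add: iota_add)
    ultimately show "act WW (Plus a b) v \<in> Vspace \<and> iota x0 (act WW (Plus a b) v) = act TT (flat (Plus a b)) (iota x0 v)" ..
  qed
next
  case (Times a b)
  show ?case
  proof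
    fix v :: "('f^'n) set \<Rightarrow> complex" assume v: "v \<in> Vspace"
    have b: "act WW b v \<in> Vspace" "iota x0 (act WW b v) = act TT (flat b) (iota x0 v)" using Times v by auto
    have a: "act WW a (act WW b v) \<in> Vspace" "iota x0 (act WW a (act WW b v)) = act TT (flat a) (iota x0 (act WW b v))"
      using Times b(1) by auto
    show "act WW (Times a b) v \<in> Vspace \<and> iota x0 (act WW (Times a b) v) = act TT (flat (Times a b)) (iota x0 v)"
      using a b unfolding flat_def by simp
  qed
qed

end


theorem mainTheorem18:
  fixes x0 x1 :: "('f::{field,finite}^'n) set"
    and X :: "wgen fterm"
    and v :: "('f^'n) set \<Rightarrow> complex"
  defines "q \<equiv> complex_of_real (sqrt (real CARD('f)))"
  assumes "vec.subspace x0" and "vec.subspace x1"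
    and "x0 \<inter> x1 = {0}" and "ssum x0 x1 = UNIV"
    and "v \<in> Vspace"
  shows "iota x0 (act (Wop q x0 x1) X v)
       = act (tens_act (Umat q 1 x0 UNIV) (Umat q (q ^ vec.dim x0) {0} x0)) (flat X) (iota x0 v)"
proof -
  interpret S01 x0 x1
    by (unfold_locales) (use assms(2-5) in auto)
  have "iota x0 (act (Wop (qv TYPE('f)) x0 x1) X v)
       = act (tens_act (Umat (qv TYPE('f)) 1 x0 UNIV) (Umat (qv TYPE('f)) (qv TYPE('f) ^ vec.dim x0) {0} x0)) (flat X) (iota x0 v)"
    using main_ind[of X] assms(6) by blast
  then show ?thesis unfolding q_def qv_def .
qed

end
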